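(* Let $s_0\in(0,1)$ and $\xi\in[1,\infty)$. Let $N=N_T$ be an increasing function of $T$ with $N_T/T=o(1)$, and for each $N$ let $0<s_0<s_{N1}<\dots<s_{NN}\le1$ be deterministic points; put $\mathcal S_N=\{s_{Ni}:1\le i\le N\}$. For each $T\ge1$ let $Y_n=m(n/T)+\epsilon_n$, $n=1,\dots,T$, where $m:[0,\infty)\to\mathbb{R}$ is Lipschitz continuous, $\|m\|_\infty<\infty$, and either $m>0$ everywhere or $m<0$ everywhere, and where $\{\epsilon_n\}$ are i.i.d. with $E(\epsilon_n)=0$ and finite fourth moment. Let $K:[0,\infty)\to[0,\infty)$ be Lipschitz continuous and bounded with $\mathrm{supp}(K)\subset[0,1]$ and $K>0$ on $(0,1)$. Let $h=h_T>0$ satisfy $|T/h-\xi|=O(1/T)$. Then $$E\sup_{s\in\mathcal S_N}\big|C_{T,s}(h)-E(C_{T,s}(h))\big|^2=o(1),\qquad T\to\infty.$$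
   Context: For $i\ge2$, $\widehat m_{h,-i}=N_{T,-i}^{-1}\,\frac1h\sum_{j=1}^{i-1}K((i-j)/h)\,Y_j$ with $N_{T,-i}=\frac1h\sum_{j=1}^{i-1}K((i-j)/h)$. For $s\in[s_0,1]$, $$C_{T,s}(h)=-\frac2T\sum_{i=2}^{\lfloor Ts\rfloor}Y_i\,\widehat m_{h,-i}+\frac1T\sum_{i=2}^{\lfloor Ts\rfloor}\widehat m_{h,-i}^2.$$ *)

theory Defs
  imports "HOL-Probability.Probability" "HOL-Library.Landau_Symbols"
begin

definition Yobs :: "(real \<Rightarrow> real) \<Rightarrow> (nat \<Rightarrow> 'a \<Rightarrow> real) \<Rightarrow> nat \<Rightarrow> nat \<Rightarrow> 'a \<Rightarrow> real" where
  "Yobs m eps T n \<omega> = m (real n / real T) + eps n \<omega>"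

definition Nloo :: "(real \<Rightarrow> real) \<Rightarrow> real \<Rightarrow> nat \<Rightarrow> real" where
  "Nloo K h i = (1 / h) * (\<Sum>j = 1..i - 1. K (real (i - j) / h))"

definition mhat :: "(real \<Rightarrow> real) \<Rightarrow> (real \<Rightarrow> real) \<Rightarrow> (nat \<Rightarrow> 'a \<Rightarrow> real) \<Rightarrow> nat \<Rightarrow> real \<Rightarrow> nat \<Rightarrow> 'a \<Rightarrow> real" where
  "mhat K m eps T h i \<omega> =
     (1 / Nloo K h i) * ((1 / h) * (\<Sum>j = 1..i - 1. K (real (i - j) / h) * Yobs m eps T j \<omega>))"

definition CTs :: "(real \<Rightarrow> real) \<Rightarrow> (real \<Rightarrow> real) \<Rightarrow> (nat \<Rightarrow> 'a \<Rightarrow> real) \<Rightarrow> nat \<Rightarrow> real \<Rightarrow> real \<Rightarrow> 'a \<Rightarrow> real" where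
  "CTs K m eps T h s \<omega> =
     - (2 / real T) * (\<Sum>i = 2..nat \<lfloor>real T * s\<rfloor>. Yobs m eps T i \<omega> * mhat K m eps T h i \<omega>)
     + (1 / real T) * (\<Sum>i = 2..nat \<lfloor>real T * s\<rfloor>. (mhat K m eps T h i \<omega>)\<^sup>2)"

end

theory Submission
  imports Defs
begin

lemma pow4_bound1: "\<bar>x::real\<bar> \<le> 1 + x^4"
proof (cases "\<bar>x\<bar> \<le> 1")
  case True
  have "0 \<le> x^4" by simp
  with True show ?thesis by linarith
next
  case False
  then have "\<bar>x\<bar>^1 \<le> \<bar>x\<bar>^4" by (intro power_increasing) auto
  then show ?thesis by (simp add: power_abs)
qed

lemma sq_avg: "((A::real)+B)^2/4 \<le> (A^2+B^2)/2"
proof -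
  have "0 \<le> (A - B)^2" by simp
  then show ?thesis by (simp add: power2_eq_square algebra_simps)
qed

lemma pow4_bound2: "(x::real)^2 \<le> 1 + x^4"
proof -
  have "0 \<le> (x^2 - 1)^2" by simp
  hence "2*x^2 \<le> x^4 + 1" by (simp add: power2_diff power_mult[symmetric])
  moreover have "0 \<le> x^2" by simp
  ultimately show ?thesis by linarith
qed

lemma pow4_bound3: "(x::real)^2 \<le> x^4 + 1"
  using pow4_bound2[of x] by linarith

lemma amgm2: "abs ((u::real) * v) \<le> (u^2+v^2)/2"
proof -
  have "0 \<le> (\<bar>u\<bar> - \<bar>v\<bar>)^2" by simp
  then show ?thesis by (simp add: power2_eq_square algebra_simps abs_mult)
qed

lemma amgm4: "abs ((a::real)*b*c*d) \<le> a^4+b^4+c^4+d^4"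
proof -
  have 1: "\<bar>a*b\<bar> \<le> (a^2+b^2)/2" by (rule amgm2)
  have 2: "\<bar>c*d\<bar> \<le> (c^2+d^2)/2" by (rule amgm2)
  have "\<bar>a*b*c*d\<bar> = \<bar>a*b\<bar> * \<bar>c*d\<bar>" by (simp add: abs_mult)
  also have "\<dots> \<le> ((a^2+b^2)/2) * ((c^2+d^2)/2)"
    using 1 2 by (intro mult_mono) auto
  also have "\<dots> \<le> (((a^2+b^2)/2)^2 + ((c^2+d^2)/2)^2)/2"
    using amgm2[of "(a^2+b^2)/2" "(c^2+d^2)/2"] by simp
  also have "\<dots> \<le> a^4+b^4+c^4+d^4"
  proof -
    have 1: "(a^2+b^2)^2/4 \<le> (a^4+b^4)/2" using sq_avg[of "a^2" "b^2"] by (simp add: power_mult[symmetric])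
    have 2: "(c^2+d^2)^2/4 \<le> (c^4+d^4)/2" using sq_avg[of "c^2" "d^2"] by (simp add: power_mult[symmetric])
    have "(((a^2+b^2)/2)^2 + ((c^2+d^2)/2)^2)/2 = ((a^2+b^2)^2/4 + (c^2+d^2)^2/4)/2"
      by (simp add: power_divide)
    also have "\<dots> \<le> ((a^4+b^4)/2 + (c^4+d^4)/2)/2" using 1 2 by (intro divide_right_mono add_mono) auto
    also have "\<dots> \<le> a^4+b^4+c^4+d^4" 
    proof -
      have "0 \<le> a^4" "0 \<le> b^4" "0 \<le> c^4" "0 \<le> d^4" by simp_all
      then show ?thesis by (simp add: field_simps)
    qed
    finally show ?thesis .
  qed
  finally show ?thesis .
qed

lemma sum_split_pairs:
  fixes a :: "nat \<Rightarrow> nat \<Rightarrow> 'b::comm_monoid_add"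
  assumes "finite J"
  shows "(\<Sum>j\<in>J. \<Sum>k\<in>J. a j k) = (\<Sum>j\<in>J. a j j) + (\<Sum>p\<in>{p\<in>J\<times>J. fst p < snd p}. a (fst p) (snd p) + a (snd p) (fst p))"
proof -
  let ?P = "{p\<in>J\<times>J. fst p < snd p}"
  let ?Q = "{p\<in>J\<times>J. snd p < fst p}"
  let ?D = "{p\<in>J\<times>J. fst p = snd p}"
  have fin: "finite (J\<times>J)" using assms by simp
  have "(\<Sum>j\<in>J. \<Sum>k\<in>J. a j k) = (\<Sum>p\<in>J\<times>J. a (fst p) (snd p))"
    by (simp add: sum.cartesian_product case_prod_beta)
  also have "J\<times>J = ?D \<union> (?P \<union> ?Q)" by auto
  also have "(\<Sum>p\<in>?D \<union> (?P \<union> ?Q). a (fst p) (snd p)) = (\<Sum>p\<in>?D. a (fst p) (snd p)) + ((\<Sum>p\<in>?P. a (fst p) (snd p)) + (\<Sum>p\<in>?Q. a (fst p) (snd p)))"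
    using fin by (subst sum.union_disjoint; (auto intro: finite_subset)?)+ 
  also have "(\<Sum>p\<in>?D. a (fst p) (snd p)) = (\<Sum>j\<in>J. a j j)"
    by (rule sum.reindex_bij_witness[where j="\<lambda>p. fst p" and i="\<lambda>j. (j,j)"]) auto
  also have "(\<Sum>p\<in>?Q. a (fst p) (snd p)) = (\<Sum>p\<in>?P. a (snd p) (fst p))"
    by (rule sum.reindex_bij_witness[where i="prod.swap" and j="prod.swap"]) auto
  finally show ?thesis by (simp add: sum.distrib)
qed

lemma sum_sq_le: "(\<Sum>j\<in>J. (q j j)^2) \<le> (\<Sum>j\<in>J. \<Sum>k\<in>J. ((q j k)::real)^2)" if "finite J"
proof -
  have "(\<Sum>j\<in>J. (q j j)^2) = (\<Sum>j\<in>J. \<Sum>k\<in>{j}. (q j k)^2)" by simp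
  also have "\<dots> \<le> (\<Sum>j\<in>J. \<Sum>k\<in>J. (q j k)^2)"
    by (intro sum_mono sum_mono2) (use that in auto)
  finally show ?thesis .
qed

lemma swap_lin:
  fixes c :: "nat \<Rightarrow> real"
  assumes "finite A" "finite J"
  shows "(\<Sum>i\<in>A. c i * (\<Sum>j\<in>J. w i j * e j)) = (\<Sum>j\<in>J. (\<Sum>i\<in>A. c i * w i j) * e j)"
proof -
  have "(\<Sum>i\<in>A. c i * (\<Sum>j\<in>J. w i j * e j)) = (\<Sum>i\<in>A. \<Sum>j\<in>J. c i * w i j * e j)"
    by (simp add: sum_distrib_left mult_ac)
  also have "\<dots> = (\<Sum>j\<in>J. \<Sum>i\<in>A. c i * w i j * e j)" by (rule sum.swap)
  also have "\<dots> = (\<Sum>j\<in>J. (\<Sum>i\<in>A. c i * w i j) * e j)" by (simp add: sum_distrib_right)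
  finally show ?thesis .
qed

lemma ext_lin:
  fixes d :: "nat \<Rightarrow> real"
  assumes "A \<subseteq> J" "finite J"
  shows "(\<Sum>i\<in>A. d i * e i) = (\<Sum>j\<in>J. (if j\<in>A then d j else 0) * e j)"
proof -
  have "(\<Sum>j\<in>J. (if j\<in>A then d j else 0) * e j) = (\<Sum>j\<in>A. (if j\<in>A then d j else 0) * e j)"
    using assms by (intro sum.mono_neutral_right) auto
  also have "\<dots> = (\<Sum>i\<in>A. d i * e i)" by simp
  finally show ?thesis by simp
qed

lemma swap_quad:
  fixes e :: "nat \<Rightarrow> real"
  assumes "finite A" "finite J"
  shows "(\<Sum>i\<in>A. (\<Sum>j\<in>J. w i j * e j)^2) = (\<Sum>j\<in>J. \<Sum>k\<in>J. (\<Sum>i\<in>A. w i j * w i k) * (e j * e k))"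
proof -
  have "(\<Sum>i\<in>A. (\<Sum>j\<in>J. w i j * e j)^2) = (\<Sum>i\<in>A. \<Sum>j\<in>J. \<Sum>k\<in>J. w i j * w i k * (e j * e k))"
    by (simp add: power2_eq_square sum_product mult_ac)
  also have "\<dots> = (\<Sum>j\<in>J. \<Sum>i\<in>A. \<Sum>k\<in>J. w i j * w i k * (e j * e k))" by (rule sum.swap)
  also have "\<dots> = (\<Sum>j\<in>J. \<Sum>k\<in>J. \<Sum>i\<in>A. w i j * w i k * (e j * e k))" by (simp only: sum.swap[of _ A])
  also have "\<dots> = (\<Sum>j\<in>J. \<Sum>k\<in>J. (\<Sum>i\<in>A. w i j * w i k) * (e j * e k))" by (simp add: sum_distrib_right)
  finally show ?thesis .
qed

lemma ext_quad:
  fixes e :: "nat \<Rightarrow> real"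
  assumes "A \<subseteq> J" "finite J"
  shows "(\<Sum>i\<in>A. e i * (\<Sum>k\<in>J. w i k * e k)) = (\<Sum>j\<in>J. \<Sum>k\<in>J. (if j\<in>A then w j k else 0) * (e j * e k))"
proof -
  have "(\<Sum>j\<in>J. \<Sum>k\<in>J. (if j\<in>A then w j k else 0) * (e j * e k)) = (\<Sum>j\<in>A. \<Sum>k\<in>J. (if j\<in>A then w j k else 0) * (e j * e k))"
    using assms by (intro sum.mono_neutral_right) auto
  also have "\<dots> = (\<Sum>i\<in>A. e i * (\<Sum>k\<in>J. w i k * e k))" by (simp add: sum_distrib_left mult_ac)
  finally show ?thesis by simp
qed

lemma abs_le_1_sq: "\<bar>y::real\<bar> \<le> 1 + y^2"
proof (cases "\<bar>y\<bar> \<le> 1")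
  case True
  have "0 \<le> y^2" by simp
  with True show ?thesis by linarith
next
  case False
  then have "\<bar>y\<bar>^1 \<le> \<bar>y\<bar>^2" by (intro power_increasing) auto
  then show ?thesis by simp
qed

lemma sq3: "((a::real) + b + c)^2 \<le> 3 * (a^2 + b^2 + c^2)"
proof -
  have "0 \<le> (a - b)^2 + (b - c)^2 + (a - c)^2" by simp
  then show ?thesis by (simp add: power2_eq_square algebra_simps)
qed

lemma sq2: "((a::real) + b)^2 \<le> 2 * (a^2 + b^2)"
proof -
  have "0 \<le> (a - b)^2" by simp
  then show ?thesis by (simp add: power2_eq_square algebra_simps)
qed

locale epsm = prob_space M for M :: "'a measure" +
  fixes eps :: "nat \<Rightarrow> 'a \<Rightarrow> real"
  assumes meas[measurable]: "\<And>n. eps n \<in> borel_measurable M"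
  and indep: "indep_vars (\<lambda>_. borel) eps UNIV"
  and ident: "\<And>n. distr M borel (eps n) = distr M borel (eps 0)"
  and int4_0: "integrable M (\<lambda>\<omega>. (eps 0 \<omega>)^4)"
  and int1_0: "integrable M (eps 0)"
  and mean0_0: "(\<integral>\<omega>. eps 0 \<omega> \<partial>M) = 0"
begin

lemma transfer_int:
  fixes f :: "real \<Rightarrow> real"
  assumes [measurable]: "f \<in> borel_measurable borel"
  shows "integrable M (\<lambda>\<omega>. f (eps n \<omega>)) \<longleftrightarrow> integrable M (\<lambda>\<omega>. f (eps 0 \<omega>))"
proof -
  have "integrable M (\<lambda>\<omega>. f (eps n \<omega>)) \<longleftrightarrow> integrable (distr M borel (eps n)) f"
    using integrable_distr_eq[of "eps n" M borel f] by simp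
  also have "\<dots> \<longleftrightarrow> integrable (distr M borel (eps 0)) f" by (simp only: ident[of n])
  also have "\<dots> \<longleftrightarrow> integrable M (\<lambda>\<omega>. f (eps 0 \<omega>))"
    using integrable_distr_eq[of "eps 0" M borel f] by simp
  finally show ?thesis .
qed

lemma transfer_integral:
  fixes f :: "real \<Rightarrow> real"
  assumes [measurable]: "f \<in> borel_measurable borel"
  shows "(\<integral>\<omega>. f (eps n \<omega>) \<partial>M) = (\<integral>\<omega>. f (eps 0 \<omega>) \<partial>M)"
proof -
  have "(\<integral>\<omega>. f (eps n \<omega>) \<partial>M) = integral\<^sup>L (distr M borel (eps n)) f"
    using integral_distr[of "eps n" M borel f] by simp
  also have "\<dots> = integral\<^sup>L (distr M borel (eps 0)) f" by (simp only: ident[of n])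
  also have "\<dots> = (\<integral>\<omega>. f (eps 0 \<omega>) \<partial>M)"
    using integral_distr[of "eps 0" M borel f] by simp
  finally show ?thesis .
qed

lemma int4: "integrable M (\<lambda>\<omega>. (eps n \<omega>)^4)"
  using transfer_int[of "\<lambda>x. x^4" n] int4_0 by simp

lemma int1: "integrable M (eps n)"
  using transfer_int[of "\<lambda>x. x" n] int1_0 by simp

lemma mean0: "(\<integral>\<omega>. eps n \<omega> \<partial>M) = 0"
  using transfer_integral[of "\<lambda>x. x" n] mean0_0 by simp

lemma int_bound:
  fixes f g :: "'a \<Rightarrow> real"
  assumes "integrable M f" and [measurable]: "g \<in> borel_measurable M"
    and b: "\<And>\<omega>. \<bar>g \<omega>\<bar> \<le> f \<omega>"
  shows "integrable M g"
proof (rule Bochner_Integration.integrable_bound[of _ f])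
  show "integrable M f" by fact
  show "g \<in> borel_measurable M" by fact
  show "AE x in M. norm (g x) \<le> norm (f x)"
  proof (rule AE_I2)
    fix x have "\<bar>g x\<bar> \<le> \<bar>f x\<bar>" using b[of x] by (meson abs_ge_self order_trans)
    then show "norm (g x) \<le> norm (f x)" by simp
  qed
qed

lemma int_monomial:
  "integrable M (\<lambda>\<omega>. eps a \<omega> * eps b \<omega> * eps c \<omega> * eps d \<omega>)"
  "integrable M (\<lambda>\<omega>. eps a \<omega> * eps b \<omega> * eps c \<omega>)"
  "integrable M (\<lambda>\<omega>. eps a \<omega> * eps b \<omega>)"
  "integrable M (\<lambda>\<omega>. (eps a \<omega>)^2)"
proof -
  have i4: "integrable M (\<lambda>\<omega>. eps a \<omega>^4 + eps b \<omega>^4 + eps c \<omega>^4 + eps d \<omega>^4)"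
    "integrable M (\<lambda>\<omega>. eps a \<omega>^4 + eps b \<omega>^4 + eps c \<omega>^4 + 1)"
    "integrable M (\<lambda>\<omega>. eps a \<omega>^4 + eps b \<omega>^4 + 1 + 1)"
    "integrable M (\<lambda>\<omega>. eps a \<omega>^4 + 1)"
    by (intro Bochner_Integration.integrable_add int4 integrable_const)+
  show "integrable M (\<lambda>\<omega>. eps a \<omega> * eps b \<omega> * eps c \<omega> * eps d \<omega>)"
  proof (rule int_bound[OF i4(1)])
    fix \<omega> show "\<bar>eps a \<omega> * eps b \<omega> * eps c \<omega> * eps d \<omega>\<bar> \<le> eps a \<omega>^4 + eps b \<omega>^4 + eps c \<omega>^4 + eps d \<omega>^4"
      by (rule amgm4)
  qed (intro borel_measurable_times borel_measurable_power meas)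
  show "integrable M (\<lambda>\<omega>. eps a \<omega> * eps b \<omega> * eps c \<omega>)"
  proof (rule int_bound[OF i4(2)])
    fix \<omega> show "\<bar>eps a \<omega> * eps b \<omega> * eps c \<omega>\<bar> \<le> eps a \<omega>^4 + eps b \<omega>^4 + eps c \<omega>^4 + 1"
      using amgm4[of "eps a \<omega>" "eps b \<omega>" "eps c \<omega>" 1] by simp
  qed (intro borel_measurable_times borel_measurable_power meas)
  show "integrable M (\<lambda>\<omega>. eps a \<omega> * eps b \<omega>)"
  proof (rule int_bound[OF i4(3)])
    fix \<omega> show "\<bar>eps a \<omega> * eps b \<omega>\<bar> \<le> eps a \<omega>^4 + eps b \<omega>^4 + 1 + 1"
      using amgm4[of "eps a \<omega>" "eps b \<omega>" 1 1] by simp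
  qed (intro borel_measurable_times borel_measurable_power meas)
  show "integrable M (\<lambda>\<omega>. (eps a \<omega>)^2)"
  proof (rule int_bound[OF i4(4)])
    fix \<omega> show "\<bar>(eps a \<omega>)^2\<bar> \<le> eps a \<omega>^4 + 1"
      using pow4_bound3[of "eps a \<omega>"] by simp
  qed (intro borel_measurable_times borel_measurable_power meas)
qed

end

context epsm begin

lemma indep_factor:
  fixes f :: "real \<Rightarrow> real" and g :: "(nat \<Rightarrow> real) \<Rightarrow> real"
  assumes S: "finite S" "u \<notin> S"
    and f[measurable]: "f \<in> borel_measurable borel"
    and g[measurable]: "g \<in> borel_measurable (PiM S (\<lambda>_. borel))"
    and intf: "integrable M (\<lambda>\<omega>. f (eps u \<omega>))"
    and intg: "integrable M (\<lambda>\<omega>. g (restrict (\<lambda>i. eps i \<omega>) S))"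
  shows "(\<integral>\<omega>. f (eps u \<omega>) * g (restrict (\<lambda>i. eps i \<omega>) S) \<partial>M)
        = (\<integral>\<omega>. f (eps u \<omega>) \<partial>M) * (\<integral>\<omega>. g (restrict (\<lambda>i. eps i \<omega>) S) \<partial>M)"
proof -
  have fm: "(\<lambda>x. f (x u)) \<in> borel_measurable (PiM {u} (\<lambda>_. borel))"
    by measurable
  have "indep_var borel ((\<lambda>x. f (x u)) \<circ> (\<lambda>\<omega>. restrict (\<lambda>i. eps i \<omega>) {u}))
     borel (g \<circ> (\<lambda>\<omega>. restrict (\<lambda>i. eps i \<omega>) S))"
    using S by (intro indep_var_compose[OF indep_var_restrict[OF indep]] fm g) auto
  also have "((\<lambda>x. f (x u)) \<circ> (\<lambda>\<omega>. restrict (\<lambda>i. eps i \<omega>) {u})) = (\<lambda>\<omega>. f (eps u \<omega>))"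
    by auto
  finally have ind: "indep_var borel (\<lambda>\<omega>. f (eps u \<omega>)) borel (\<lambda>\<omega>. g (restrict (\<lambda>i. eps i \<omega>) S))"
    by (simp add: comp_def restrict_def)
  show ?thesis
    using indep_var_lebesgue_integral[OF ind intf intg] by simp
qed

definition "sig2 = (\<integral>\<omega>. (eps 0 \<omega>)^2 \<partial>M)"
definition "vv = (\<integral>\<omega>. ((eps 0 \<omega>)^2 - sig2)^2 \<partial>M)"

lemma mom2: "(\<integral>\<omega>. (eps n \<omega>)^2 \<partial>M) = sig2"
  unfolding sig2_def using transfer_integral[of "\<lambda>x. x^2" n] by simp

lemma momv: "(\<integral>\<omega>. ((eps n \<omega>)^2 - sig2)^2 \<partial>M) = vv"
  unfolding vv_def using transfer_integral[of "\<lambda>x. (x^2 - sig2)^2" n] by simp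

lemma sig2_nonneg: "0 \<le> sig2"
  unfolding sig2_def by simp

lemma vv_nonneg: "0 \<le> vv"
  unfolding vv_def by simp

lemma int_sqc: "integrable M (\<lambda>\<omega>. (eps n \<omega>)^2 - c)"
  using int_monomial(4)[of n] by simp

lemma int_sqc2: "integrable M (\<lambda>\<omega>. ((eps n \<omega>)^2 - c)^2)"
proof -
  have "(\<lambda>\<omega>. ((eps n \<omega>)^2 - c)^2) = (\<lambda>\<omega>. eps n \<omega> * eps n \<omega> * eps n \<omega> * eps n \<omega> - 2 * c * (eps n \<omega>)^2 + c^2)"
    by (auto simp: power2_eq_square algebra_simps)
  then show ?thesis using int_monomial(1)[of n n n n] int_monomial(4)[of n] by simp
qed

lemma comp_meas: "(\<lambda>x. x k) \<in> borel_measurable (PiM S (\<lambda>_. borel :: real measure))" if "k \<in> S"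
  using that by measurable

lemma eps_ortho: "j \<noteq> k \<Longrightarrow> (\<integral>\<omega>. eps j \<omega> * eps k \<omega> \<partial>M) = 0"
  using indep_factor[of "{k}" j "\<lambda>x. x" "\<lambda>x. x k"] comp_meas[of k "{k}"] int1 mean0 by simp

lemma sq_ortho: "j \<noteq> k \<Longrightarrow> (\<integral>\<omega>. ((eps j \<omega>)^2 - sig2) * ((eps k \<omega>)^2 - sig2) \<partial>M) = 0"
proof -
  assume jk: "j \<noteq> k"
  have gm: "(\<lambda>x::nat\<Rightarrow>real. (x k)^2 - sig2) \<in> borel_measurable (PiM {k} (\<lambda>_. borel))"
    by (intro borel_measurable_diff borel_measurable_power comp_meas borel_measurable_const) auto
  have "(\<integral>\<omega>. (eps j \<omega>)^2 - sig2 \<partial>M) = 0" using mom2[of j] int_monomial(4)[of j] by (simp add: prob_space)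
  then show ?thesis
    using indep_factor[of "{k}" j "\<lambda>x. x^2 - sig2" "\<lambda>x. (x k)^2 - sig2"] gm jk int_sqc by simp
qed

lemma sq_prod: "j \<noteq> k \<Longrightarrow> (\<integral>\<omega>. (eps j \<omega>)^2 * (eps k \<omega>)^2 \<partial>M) = sig2^2"
proof -
  assume jk: "j \<noteq> k"
  have gm: "(\<lambda>x::nat\<Rightarrow>real. (x k)^2) \<in> borel_measurable (PiM {k} (\<lambda>_. borel))"
    by (intro borel_measurable_power comp_meas) auto
  show ?thesis
    using indep_factor[of "{k}" j "\<lambda>x. x^2" "\<lambda>x. (x k)^2"] gm jk int_monomial(4) mom2
    by (simp add: power2_eq_square)
qed

lemma four_zero:
  assumes "u \<notin> {a,b,c}"
  shows "(\<integral>\<omega>. eps u \<omega> * (eps a \<omega> * eps b \<omega> * eps c \<omega>) \<partial>M) = 0"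
proof -
  have gm: "(\<lambda>x::nat\<Rightarrow>real. x a * x b * x c) \<in> borel_measurable (PiM {a,b,c} (\<lambda>_. borel))"
    by (intro borel_measurable_times comp_meas) auto
  show ?thesis
    using indep_factor[of "{a,b,c}" u "\<lambda>x. x" "\<lambda>x. x a * x b * x c"] gm assms int1 mean0
      int_monomial(2)[of a b c] by simp
qed

end

context epsm begin

lemma orth_sum:
  fixes \<phi> :: "'i \<Rightarrow> 'a \<Rightarrow> real"
  assumes fin: "finite A"
    and int: "\<And>a b. a\<in>A \<Longrightarrow> b\<in>A \<Longrightarrow> integrable M (\<lambda>\<omega>. \<phi> a \<omega> * \<phi> b \<omega>)"
    and orth: "\<And>a b. a\<in>A \<Longrightarrow> b\<in>A \<Longrightarrow> a \<noteq> b \<Longrightarrow> (\<integral>\<omega>. \<phi> a \<omega> * \<phi> b \<omega> \<partial>M) = 0"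
  shows "(\<integral>\<omega>. (\<Sum>a\<in>A. c a * \<phi> a \<omega>)^2 \<partial>M) = (\<Sum>a\<in>A. (c a)^2 * (\<integral>\<omega>. \<phi> a \<omega> * \<phi> a \<omega> \<partial>M))"
    and "integrable M (\<lambda>\<omega>. (\<Sum>a\<in>A. c a * \<phi> a \<omega>)^2)"
proof -
  have eq: "(\<lambda>\<omega>. (\<Sum>a\<in>A. c a * \<phi> a \<omega>)^2) = (\<lambda>\<omega>. \<Sum>a\<in>A. \<Sum>b\<in>A. c a * c b * (\<phi> a \<omega> * \<phi> b \<omega>))"
    by (auto simp: power2_eq_square sum_product algebra_simps)
  show "integrable M (\<lambda>\<omega>. (\<Sum>a\<in>A. c a * \<phi> a \<omega>)^2)"
    unfolding eq using int by (intro Bochner_Integration.integrable_sum Bochner_Integration.integrable_mult_right) auto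
  have "(\<integral>\<omega>. (\<Sum>a\<in>A. c a * \<phi> a \<omega>)^2 \<partial>M) = (\<Sum>a\<in>A. \<Sum>b\<in>A. c a * c b * (\<integral>\<omega>. \<phi> a \<omega> * \<phi> b \<omega> \<partial>M))"
    unfolding eq using int by (simp add: Bochner_Integration.integrable_sum Bochner_Integration.integrable_mult_right)
  also have "\<dots> = (\<Sum>a\<in>A. \<Sum>b\<in>A. if b = a then c a * c a * (\<integral>\<omega>. \<phi> a \<omega> * \<phi> a \<omega> \<partial>M) else 0)"
    using orth by (intro sum.cong refl) auto
  also have "\<dots> = (\<Sum>a\<in>A. (c a)^2 * (\<integral>\<omega>. \<phi> a \<omega> * \<phi> a \<omega> \<partial>M))"
    using fin by (simp add: power2_eq_square)
  finally show "(\<integral>\<omega>. (\<Sum>a\<in>A. c a * \<phi> a \<omega>)^2 \<partial>M) = (\<Sum>a\<in>A. (c a)^2 * (\<integral>\<omega>. \<phi> a \<omega> * \<phi> a \<omega> \<partial>M))" .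
qed

lemma lin_form:
  assumes "finite J"
  shows "(\<integral>\<omega>. (\<Sum>j\<in>J. \<beta> j * eps j \<omega>)^2 \<partial>M) = sig2 * (\<Sum>j\<in>J. (\<beta> j)^2)"
    and "integrable M (\<lambda>\<omega>. (\<Sum>j\<in>J. \<beta> j * eps j \<omega>)^2)"
proof -
  have i: "\<And>a b. integrable M (\<lambda>\<omega>. eps a \<omega> * eps b \<omega>)" by (rule int_monomial(3))
  have o: "\<And>a b. a \<noteq> b \<Longrightarrow> (\<integral>\<omega>. eps a \<omega> * eps b \<omega> \<partial>M) = 0" by (rule eps_ortho)
  have m: "\<And>a. (\<integral>\<omega>. eps a \<omega> * eps a \<omega> \<partial>M) = sig2" using mom2 by (simp add: power2_eq_square)
  show "(\<integral>\<omega>. (\<Sum>j\<in>J. \<beta> j * eps j \<omega>)^2 \<partial>M) = sig2 * (\<Sum>j\<in>J. (\<beta> j)^2)"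
    using orth_sum(1)[of J eps \<beta>, OF assms i o] m by (simp add: sum_distrib_left mult.commute)
  show "integrable M (\<lambda>\<omega>. (\<Sum>j\<in>J. \<beta> j * eps j \<omega>)^2)"
    using orth_sum(2)[of J eps \<beta>, OF assms i o] .
qed

lemma pair_ortho:
  assumes "j < k" "l < m" "(j,k) \<noteq> (l,m)"
  shows "(\<integral>\<omega>. (eps j \<omega> * eps k \<omega>) * (eps l \<omega> * eps m \<omega>) \<partial>M) = 0"
proof (cases "j \<notin> {k,l,m}")
  case True
  have "(\<lambda>\<omega>. (eps j \<omega> * eps k \<omega>) * (eps l \<omega> * eps m \<omega>)) = (\<lambda>\<omega>. eps j \<omega> * (eps k \<omega> * eps l \<omega> * eps m \<omega>))"
    by (simp add: mult_ac)
  then show ?thesis using four_zero[OF True] by simp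
next
  case False
  then have jlm: "j = l \<or> j = m" using assms by auto
  show ?thesis
  proof (cases "j = l")
    case True
    then have "k \<notin> {j,l,m}" using assms by auto
    moreover have "(\<lambda>\<omega>. (eps j \<omega> * eps k \<omega>) * (eps l \<omega> * eps m \<omega>)) = (\<lambda>\<omega>. eps k \<omega> * (eps j \<omega> * eps l \<omega> * eps m \<omega>))"
      by (simp add: mult_ac)
    ultimately show ?thesis using four_zero by simp
  next
    case False
    then have "j = m" using jlm by simp
    then have "l \<notin> {j,k,m}" using assms by auto
    moreover have "(\<lambda>\<omega>. (eps j \<omega> * eps k \<omega>) * (eps l \<omega> * eps m \<omega>)) = (\<lambda>\<omega>. eps l \<omega> * (eps j \<omega> * eps k \<omega> * eps m \<omega>))"
      by (simp add: mult_ac)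
    ultimately show ?thesis using four_zero by simp
  qed
qed

lemma quad_form:
  assumes fin: "finite J"
  shows "(\<integral>\<omega>. ((\<Sum>j\<in>J. \<Sum>k\<in>J. q j k * (eps j \<omega> * eps k \<omega>)) - sig2 * (\<Sum>j\<in>J. q j j))^2 \<partial>M)
           \<le> (2 * vv + 4 * sig2^2) * (\<Sum>j\<in>J. \<Sum>k\<in>J. (q j k)^2)"
    and "integrable M (\<lambda>\<omega>. ((\<Sum>j\<in>J. \<Sum>k\<in>J. q j k * (eps j \<omega> * eps k \<omega>)) - sig2 * (\<Sum>j\<in>J. q j j))^2)"
proof -
  define P where "P = {p\<in>J\<times>J. fst p < snd p}"
  have finP: "finite P" unfolding P_def using fin by simp
  define X where "X \<omega> = (\<Sum>j\<in>J. q j j * ((eps j \<omega>)^2 - sig2))" for \<omega>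
  define r where "r p = q (fst p) (snd p) + q (snd p) (fst p)" for p
  define Y where "Y \<omega> = (\<Sum>p\<in>P. r p * (eps (fst p) \<omega> * eps (snd p) \<omega>))" for \<omega>
  have eq: "((\<Sum>j\<in>J. \<Sum>k\<in>J. q j k * (eps j \<omega> * eps k \<omega>)) - sig2 * (\<Sum>j\<in>J. q j j)) = X \<omega> + Y \<omega>" for \<omega>
  proof -
    have "(\<Sum>j\<in>J. \<Sum>k\<in>J. q j k * (eps j \<omega> * eps k \<omega>)) = (\<Sum>j\<in>J. q j j * (eps j \<omega> * eps j \<omega>)) + Y \<omega>"
      unfolding Y_def r_def P_def by (subst sum_split_pairs[OF fin]) (simp add: algebra_simps sum.distrib)
    then show ?thesis unfolding X_def
      by (simp add: sum_subtractf sum_distrib_left algebra_simps power2_eq_square)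
  qed
  have iX: "\<And>a b. integrable M (\<lambda>\<omega>. ((eps a \<omega>)^2 - sig2) * ((eps b \<omega>)^2 - sig2))"
  proof -
    fix a b
    have "(\<lambda>\<omega>. ((eps a \<omega>)^2 - sig2) * ((eps b \<omega>)^2 - sig2)) = (\<lambda>\<omega>. eps a \<omega> * eps a \<omega> * eps b \<omega> * eps b \<omega> - sig2 * (eps a \<omega>)^2 - sig2 * (eps b \<omega>)^2 + sig2^2)"
      by (auto simp: power2_eq_square algebra_simps)
    then show "integrable M (\<lambda>\<omega>. ((eps a \<omega>)^2 - sig2) * ((eps b \<omega>)^2 - sig2))"
      using int_monomial(1)[of a a b b] int_monomial(4)[of a] int_monomial(4)[of b] by simp
  qed
  have X2: "(\<integral>\<omega>. (X \<omega>)^2 \<partial>M) = vv * (\<Sum>j\<in>J. (q j j)^2)"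
    and iX2: "integrable M (\<lambda>\<omega>. (X \<omega>)^2)"
  proof -
    have m: "\<And>a. (\<integral>\<omega>. ((eps a \<omega>)^2 - sig2) * ((eps a \<omega>)^2 - sig2) \<partial>M) = vv"
      using momv by (simp add: power2_eq_square)
    show "(\<integral>\<omega>. (X \<omega>)^2 \<partial>M) = vv * (\<Sum>j\<in>J. (q j j)^2)"
      unfolding X_def using orth_sum(1)[of J "\<lambda>j \<omega>. (eps j \<omega>)^2 - sig2" "\<lambda>j. q j j", OF fin iX sq_ortho] m
      by (simp add: sum_distrib_left mult.commute)
    show "integrable M (\<lambda>\<omega>. (X \<omega>)^2)"
      unfolding X_def using orth_sum(2)[of J "\<lambda>j \<omega>. (eps j \<omega>)^2 - sig2" "\<lambda>j. q j j", OF fin iX sq_ortho] .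
  qed
  have iY: "\<And>a b. integrable M (\<lambda>\<omega>. (eps (fst a) \<omega> * eps (snd a) \<omega>) * (eps (fst b) \<omega> * eps (snd b) \<omega>))"
    using int_monomial(1) by (simp add: mult.assoc)
  have oY: "\<And>a b. a \<in> P \<Longrightarrow> b \<in> P \<Longrightarrow> a \<noteq> b \<Longrightarrow> (\<integral>\<omega>. (eps (fst a) \<omega> * eps (snd a) \<omega>) * (eps (fst b) \<omega> * eps (snd b) \<omega>) \<partial>M) = 0"
    unfolding P_def by (intro pair_ortho) (auto simp: prod_eq_iff)
  have mY: "\<And>a. a \<in> P \<Longrightarrow> (\<integral>\<omega>. (eps (fst a) \<omega> * eps (snd a) \<omega>) * (eps (fst a) \<omega> * eps (snd a) \<omega>) \<partial>M) = sig2^2"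
  proof -
    fix a assume "a \<in> P"
    then have "fst a \<noteq> snd a" unfolding P_def by auto
    then show "(\<integral>\<omega>. (eps (fst a) \<omega> * eps (snd a) \<omega>) * (eps (fst a) \<omega> * eps (snd a) \<omega>) \<partial>M) = sig2^2"
      using sq_prod[of "fst a" "snd a"] by (simp add: power2_eq_square mult_ac)
  qed
  have Y2: "(\<integral>\<omega>. (Y \<omega>)^2 \<partial>M) = sig2^2 * (\<Sum>p\<in>P. (r p)^2)"
    and iY2: "integrable M (\<lambda>\<omega>. (Y \<omega>)^2)"
  proof -
    show "(\<integral>\<omega>. (Y \<omega>)^2 \<partial>M) = sig2^2 * (\<Sum>p\<in>P. (r p)^2)"
      unfolding Y_def using orth_sum(1)[of P "\<lambda>p \<omega>. eps (fst p) \<omega> * eps (snd p) \<omega>" r, OF finP iY oY] mY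
      by (simp add: sum_distrib_left mult.commute)
    show "integrable M (\<lambda>\<omega>. (Y \<omega>)^2)"
      unfolding Y_def using orth_sum(2)[of P "\<lambda>p \<omega>. eps (fst p) \<omega> * eps (snd p) \<omega>" r, OF finP iY oY] .
  qed
  have bnd: "\<And>\<omega>. (X \<omega> + Y \<omega>)^2 \<le> 2 * (X \<omega>)^2 + 2 * (Y \<omega>)^2"
  proof -
    fix \<omega> have "0 \<le> (X \<omega> - Y \<omega>)^2" by simp
    then show "(X \<omega> + Y \<omega>)^2 \<le> 2 * (X \<omega>)^2 + 2 * (Y \<omega>)^2" by (simp add: power2_eq_square algebra_simps)
  qed
  have measX: "X \<in> borel_measurable M" unfolding X_def by measurable
  have measY: "Y \<in> borel_measurable M" unfolding Y_def by measurable
  have iXY: "integrable M (\<lambda>\<omega>. (X \<omega> + Y \<omega>)^2)"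
    by (rule int_bound[of "\<lambda>\<omega>. 2 * (X \<omega>)^2 + 2 * (Y \<omega>)^2"])
       (use iX2 iY2 bnd measX measY in auto)
  show "integrable M (\<lambda>\<omega>. ((\<Sum>j\<in>J. \<Sum>k\<in>J. q j k * (eps j \<omega> * eps k \<omega>)) - sig2 * (\<Sum>j\<in>J. q j j))^2)"
    unfolding eq by (rule iXY)
  have "(\<integral>\<omega>. ((\<Sum>j\<in>J. \<Sum>k\<in>J. q j k * (eps j \<omega> * eps k \<omega>)) - sig2 * (\<Sum>j\<in>J. q j j))^2 \<partial>M)
      = (\<integral>\<omega>. (X \<omega> + Y \<omega>)^2 \<partial>M)" unfolding eq ..
  also have "\<dots> \<le> (\<integral>\<omega>. 2 * (X \<omega>)^2 + 2 * (Y \<omega>)^2 \<partial>M)"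
    by (rule integral_mono) (use iXY iX2 iY2 bnd in auto)
  also have "\<dots> = 2 * vv * (\<Sum>j\<in>J. (q j j)^2) + 2 * sig2^2 * (\<Sum>p\<in>P. (r p)^2)"
    using iX2 iY2 X2 Y2 by simp
  also have "\<dots> \<le> (2 * vv + 4 * sig2^2) * (\<Sum>j\<in>J. \<Sum>k\<in>J. (q j k)^2)"
  proof -
    let ?S = "\<Sum>j\<in>J. \<Sum>k\<in>J. (q j k)^2"
    have d: "(\<Sum>j\<in>J. (q j j)^2) \<le> ?S" by (rule sum_sq_le[OF fin])
    have "?S = (\<Sum>j\<in>J. (q j j)^2) + (\<Sum>p\<in>P. (q (fst p) (snd p))^2 + (q (snd p) (fst p))^2)"
      unfolding P_def by (rule sum_split_pairs[OF fin])
    moreover have "0 \<le> (\<Sum>j\<in>J. (q j j)^2)" by (intro sum_nonneg) auto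
    ultimately have o: "(\<Sum>p\<in>P. (q (fst p) (snd p))^2 + (q (snd p) (fst p))^2) \<le> ?S" by linarith
    have "(\<Sum>p\<in>P. (r p)^2) \<le> (\<Sum>p\<in>P. 2 * ((q (fst p) (snd p))^2 + (q (snd p) (fst p))^2))"
    proof (intro sum_mono)
      fix p
      have "0 \<le> (q (fst p) (snd p) - q (snd p) (fst p))^2" by simp
      then show "(r p)^2 \<le> 2 * ((q (fst p) (snd p))^2 + (q (snd p) (fst p))^2)"
        unfolding r_def by (simp add: power2_eq_square algebra_simps)
    qed
    also have "\<dots> = 2 * (\<Sum>p\<in>P. (q (fst p) (snd p))^2 + (q (snd p) (fst p))^2)"
      by (rule sum_distrib_left[symmetric])
    also have "\<dots> \<le> 2 * ?S" using o by simp
    finally have r: "(\<Sum>p\<in>P. (r p)^2) \<le> 2 * ?S" .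
    have "2 * vv * (\<Sum>j\<in>J. (q j j)^2) \<le> 2 * vv * ?S"
      using d vv_nonneg by (intro mult_left_mono) auto
    moreover have "2 * sig2^2 * (\<Sum>p\<in>P. (r p)^2) \<le> 2 * sig2^2 * (2 * ?S)"
      using r by (intro mult_left_mono) auto
    ultimately show ?thesis by (simp add: algebra_simps)
  qed
  finally show "(\<integral>\<omega>. ((\<Sum>j\<in>J. \<Sum>k\<in>J. q j k * (eps j \<omega> * eps k \<omega>)) - sig2 * (\<Sum>j\<in>J. q j j))^2 \<partial>M)
           \<le> (2 * vv + 4 * sig2^2) * (\<Sum>j\<in>J. \<Sum>k\<in>J. (q j k)^2)" .
qed

end

definition wt :: "(real \<Rightarrow> real) \<Rightarrow> real \<Rightarrow> nat \<Rightarrow> nat \<Rightarrow> real" where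
  "wt K h i j = (if 1 \<le> j \<and> j < i then K (real (i - j) / h) / (h * Nloo K h i) else 0)"

lemma weighted_sq:
  fixes w y :: "'i \<Rightarrow> real"
  assumes "finite J" "\<And>j. j \<in> J \<Longrightarrow> 0 \<le> w j" "(\<Sum>j\<in>J. w j) \<le> 1"
  shows "(\<Sum>j\<in>J. w j * y j)^2 \<le> (\<Sum>j\<in>J. w j * (y j)^2)"
proof -
  define a where "a = (\<Sum>j\<in>J. w j * y j)"
  define S where "S = (\<Sum>j\<in>J. w j)"
  have "0 \<le> (\<Sum>j\<in>J. w j * (y j - a)^2)" using assms by (intro sum_nonneg) auto
  also have "(\<Sum>j\<in>J. w j * (y j - a)^2) = (\<Sum>j\<in>J. w j * (y j)^2 - 2 * a * (w j * y j) + a^2 * w j)"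
    by (intro sum.cong refl) (simp add: power2_eq_square algebra_simps)
  also have "\<dots> = (\<Sum>j\<in>J. w j * (y j)^2) - 2 * a * a + a^2 * S"
    unfolding S_def by (simp add: sum.distrib sum_subtractf sum_distrib_left a_def)
  finally have "a^2 * (2 - S) \<le> (\<Sum>j\<in>J. w j * (y j)^2)" by (simp add: algebra_simps power2_eq_square)
  moreover have "a^2 \<le> a^2 * (2 - S)" using assms(3) unfolding S_def
    by (simp add: mult_le_cancel_left1)
  ultimately show ?thesis unfolding a_def by linarith
qed

lemma sum_sq_card:
  fixes x :: "'i \<Rightarrow> real"
  assumes "finite A"
  shows "(\<Sum>i\<in>A. x i)^2 \<le> real (card A) * (\<Sum>i\<in>A. (x i)^2)"
proof (cases "A = {}")
  case True then show ?thesis by simp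
next
  case False
  then have c: "0 < real (card A)" using assms by (simp add: card_gt_0_iff)
  define c' where "c' = real (card A)"
  have c0: "0 < c'" using c unfolding c'_def .
  have h: "(\<Sum>i\<in>A. (1 / c') * x i)^2 \<le> (\<Sum>i\<in>A. (1 / c') * (x i)^2)"
    using c0 by (intro weighted_sq assms) (auto simp: c'_def)
  have e1: "(\<Sum>i\<in>A. (1 / c') * x i) = (1/c') * (\<Sum>i\<in>A. x i)" by (rule sum_distrib_left[symmetric])
  have e2: "(\<Sum>i\<in>A. (1 / c') * (x i)^2) = (1/c') * (\<Sum>i\<in>A. (x i)^2)" by (rule sum_distrib_left[symmetric])
  have "(\<Sum>i\<in>A. x i)^2 = c'^2 * ((1/c') * (\<Sum>i\<in>A. x i))^2"
    using c0 by (simp add: power_mult_distrib power_divide)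
  also have "\<dots> \<le> c'^2 * ((1/c') * (\<Sum>i\<in>A. (x i)^2))"
    using h e1 e2 by (intro mult_left_mono) auto
  also have "\<dots> = c' * (\<Sum>i\<in>A. (x i)^2)" using c0 by (simp add: power2_eq_square)
  finally show ?thesis unfolding c'_def .
qed

lemma wt_nonneg:
  assumes "0 < h" "\<And>x. 0 \<le> x \<Longrightarrow> 0 \<le> K x"
  shows "0 \<le> wt K h i j"
proof -
  have k: "0 \<le> K (real (i - j) / h)" for j using assms by simp
  have "0 \<le> Nloo K h i" unfolding Nloo_def using assms k by (simp add: sum_nonneg)
  then show ?thesis unfolding wt_def using assms k by simp
qed

lemma wt_sum:
  assumes "0 < h" "\<And>x. 0 \<le> x \<Longrightarrow> 0 \<le> K x"
  shows "(\<Sum>j\<in>{1..T}. wt K h i j) \<le> 1"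
proof -
  define SK where "SK = (\<Sum>j = 1..i - 1. K (real (i - j) / h))"
  have hN: "h * Nloo K h i = SK" unfolding Nloo_def SK_def using assms(1) by simp
  have "(\<Sum>j\<in>{1..T}. wt K h i j) \<le> (\<Sum>j\<in>{1..i-1}. wt K h i j)"
  proof -
    have "(\<Sum>j\<in>{1..T}. wt K h i j) = (\<Sum>j\<in>{1..T} \<inter> {1..i-1}. wt K h i j)"
      by (intro sum.mono_neutral_right) (auto simp: wt_def)
    also have "\<dots> \<le> (\<Sum>j\<in>{1..i-1}. wt K h i j)"
      by (intro sum_mono2) (auto intro: wt_nonneg[OF assms])
    finally show ?thesis .
  qed
  also have "(\<Sum>j\<in>{1..i-1}. wt K h i j) = (\<Sum>j\<in>{1..i-1}. K (real (i - j) / h) / SK)"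
    by (intro sum.cong refl) (auto simp: wt_def hN)
  also have "\<dots> = SK / SK" by (simp only: sum_divide_distrib[symmetric] SK_def)
  also have "\<dots> \<le> 1" by (cases "SK = 0") auto
  finally show ?thesis .
qed

lemma mhat_wt:
  assumes "i \<le> T"
  shows "mhat K m eps T h i \<omega> = (\<Sum>j\<in>{1..T}. wt K h i j * Yobs m eps T j \<omega>)"
proof -
  have "(\<Sum>j\<in>{1..T}. wt K h i j * Yobs m eps T j \<omega>) = (\<Sum>j\<in>{1..i-1}. wt K h i j * Yobs m eps T j \<omega>)"
    using assms by (intro sum.mono_neutral_right) (auto simp: wt_def)
  also have "\<dots> = (\<Sum>j\<in>{1..i-1}. K (real (i - j) / h) * Yobs m eps T j \<omega> / (h * Nloo K h i))"
    by (intro sum.cong refl) (auto simp: wt_def)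
  also have "\<dots> = (\<Sum>j\<in>{1..i-1}. K (real (i - j) / h) * Yobs m eps T j \<omega>) / (h * Nloo K h i)"
    by (rule sum_divide_distrib[symmetric])
  also have "\<dots> = mhat K m eps T h i \<omega>"
    unfolding mhat_def by (simp add: divide_inverse mult_ac)
  finally show ?thesis by simp
qed

locale model = epsm M eps for M :: "'a measure" and eps +
  fixes m K :: "real \<Rightarrow> real" and B :: real
  assumes mB: "\<And>x. 0 \<le> x \<Longrightarrow> \<bar>m x\<bar> \<le> B"
    and Knn: "\<And>x. 0 \<le> x \<Longrightarrow> 0 \<le> K x"
begin

definition "mu T j = m (real j / real T)"
definition "nu T h i = (\<Sum>j\<in>{1..T}. wt K h i j * mu T j)"
definition "eta T h i \<omega> = (\<Sum>j\<in>{1..T}. wt K h i j * eps j \<omega>)"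
definition "Gs T h A \<omega> = - (2 / real T) * (\<Sum>i\<in>A. Yobs m eps T i \<omega> * mhat K m eps T h i \<omega>)
     + (1 / real T) * (\<Sum>i\<in>A. (mhat K m eps T h i \<omega>)\<^sup>2)"

lemma CTs_Gs: "CTs K m eps T h s \<omega> = Gs T h {2..nat \<lfloor>real T * s\<rfloor>} \<omega>"
  unfolding CTs_def Gs_def ..

lemma Gs_union: "finite A \<Longrightarrow> finite C \<Longrightarrow> A \<inter> C = {} \<Longrightarrow> Gs T h (A \<union> C) \<omega> = Gs T h A \<omega> + Gs T h C \<omega>"
  unfolding Gs_def by (simp add: sum.union_disjoint algebra_simps)

lemma mu_bound: "\<bar>mu T j\<bar> \<le> B"
  unfolding mu_def by (rule mB) simp

lemma B_nonneg: "0 \<le> B"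
  using mu_bound[of 0 0] by simp

lemma Y_mu: "Yobs m eps T j \<omega> = mu T j + eps j \<omega>"
  unfolding Yobs_def mu_def ..

lemma mhat_split: "i \<le> T \<Longrightarrow> 0 < h \<Longrightarrow> mhat K m eps T h i \<omega> = nu T h i + eta T h i \<omega>"
  by (simp add: mhat_wt Y_mu nu_def eta_def sum.distrib distrib_left)

lemma nu_bound: "0 < h \<Longrightarrow> \<bar>nu T h i\<bar> \<le> B"
proof -
  assume h: "0 < h"
  have "\<bar>nu T h i\<bar> \<le> (\<Sum>j\<in>{1..T}. wt K h i j * \<bar>mu T j\<bar>)"
    unfolding nu_def using wt_nonneg[OF h Knn] by (auto intro: order_trans[OF sum_abs] simp: abs_mult)
  also have "\<dots> \<le> (\<Sum>j\<in>{1..T}. wt K h i j * B)"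
    using wt_nonneg[OF h Knn] mu_bound by (intro sum_mono mult_left_mono) auto
  also have "\<dots> = (\<Sum>j\<in>{1..T}. wt K h i j) * B" by (simp add: sum_distrib_right)
  also have "\<dots> \<le> 1 * B" using wt_sum[OF h Knn] B_nonneg by (intro mult_right_mono) auto
  finally show ?thesis by simp
qed

definition "c0 T h A = (1 / real T) * (\<Sum>i\<in>A. (nu T h i)^2 - 2 * mu T i * nu T h i)"
definition "beta T h A j = (1 / real T) * ((\<Sum>i\<in>A. (2 * nu T h i - 2 * mu T i) * wt K h i j) - (if j \<in> A then 2 * nu T h j else 0))"
definition "qq T h A j k = (1 / real T) * ((\<Sum>i\<in>A. wt K h i j * wt K h i k) - (if j \<in> A then 2 * wt K h j k else 0))"

lemma Gs_decomp:
  assumes h: "0 < h" and A: "A \<subseteq> {1..T}"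
  shows "Gs T h A \<omega> = c0 T h A + (\<Sum>j\<in>{1..T}. beta T h A j * eps j \<omega>)
           + (\<Sum>j\<in>{1..T}. \<Sum>k\<in>{1..T}. qq T h A j k * (eps j \<omega> * eps k \<omega>))"
proof -
  let ?J = "{1..T}"
  have finA: "finite A" using A finite_subset by blast
  define Z where "Z i = ((nu T h i)^2 - 2 * mu T i * nu T h i)
     + ((2 * nu T h i - 2 * mu T i) * eta T h i \<omega> - 2 * nu T h i * eps i \<omega>)
     + ((eta T h i \<omega>)^2 - 2 * (eps i \<omega> * eta T h i \<omega>))" for i
  have Zi: "- 2 * (Yobs m eps T i \<omega> * mhat K m eps T h i \<omega>) + (mhat K m eps T h i \<omega>)^2 = Z i" if "i \<in> A" for i
  proof -
    have "i \<le> T" using that A by auto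
    then show ?thesis unfolding Z_def by (simp add: mhat_split[OF _ h] Y_mu power2_eq_square algebra_simps)
  qed
  have "Gs T h A \<omega> = (1 / real T) * (\<Sum>i\<in>A. - 2 * (Yobs m eps T i \<omega> * mhat K m eps T h i \<omega>) + (mhat K m eps T h i \<omega>)^2)"
    unfolding Gs_def by (simp add: sum.distrib sum_subtractf sum_distrib_left[symmetric] algebra_simps)
  also have "\<dots> = (1 / real T) * (\<Sum>i\<in>A. Z i)" using Zi by simp
  also have "(\<Sum>i\<in>A. Z i) = (\<Sum>i\<in>A. (nu T h i)^2 - 2 * mu T i * nu T h i)
      + ((\<Sum>i\<in>A. (2 * nu T h i - 2 * mu T i) * eta T h i \<omega>) - (\<Sum>i\<in>A. (2 * nu T h i) * eps i \<omega>))
      + ((\<Sum>i\<in>A. (eta T h i \<omega>)^2) - 2 * (\<Sum>i\<in>A. eps i \<omega> * eta T h i \<omega>))"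
    unfolding Z_def by (simp add: sum.distrib sum_subtractf sum_distrib_left)
  also have "(\<Sum>i\<in>A. (2 * nu T h i - 2 * mu T i) * eta T h i \<omega>)
      = (\<Sum>j\<in>?J. (\<Sum>i\<in>A. (2 * nu T h i - 2 * mu T i) * wt K h i j) * eps j \<omega>)"
    unfolding eta_def by (rule swap_lin[OF finA]) simp
  also have "(\<Sum>i\<in>A. (2 * nu T h i) * eps i \<omega>) = (\<Sum>j\<in>?J. (if j \<in> A then 2 * nu T h j else 0) * eps j \<omega>)"
    by (rule ext_lin[OF A]) simp
  also have "(\<Sum>i\<in>A. (eta T h i \<omega>)^2) = (\<Sum>j\<in>?J. \<Sum>k\<in>?J. (\<Sum>i\<in>A. wt K h i j * wt K h i k) * (eps j \<omega> * eps k \<omega>))"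
    unfolding eta_def by (rule swap_quad[OF finA]) simp
  also have "(\<Sum>i\<in>A. eps i \<omega> * eta T h i \<omega>) = (\<Sum>j\<in>?J. \<Sum>k\<in>?J. (if j \<in> A then wt K h j k else 0) * (eps j \<omega> * eps k \<omega>))"
    unfolding eta_def by (rule ext_quad[OF A]) simp
  finally have "Gs T h A \<omega> = (1 / real T) * ((\<Sum>i\<in>A. (nu T h i)^2 - 2 * mu T i * nu T h i)
      + ((\<Sum>j\<in>?J. (\<Sum>i\<in>A. (2 * nu T h i - 2 * mu T i) * wt K h i j) * eps j \<omega>) - (\<Sum>j\<in>?J. (if j \<in> A then 2 * nu T h j else 0) * eps j \<omega>))
      + ((\<Sum>j\<in>?J. \<Sum>k\<in>?J. (\<Sum>i\<in>A. wt K h i j * wt K h i k) * (eps j \<omega> * eps k \<omega>)) - 2 * (\<Sum>j\<in>?J. \<Sum>k\<in>?J. (if j \<in> A then wt K h j k else 0) * (eps j \<omega> * eps k \<omega>))))" .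
  moreover have "(\<Sum>j\<in>?J. beta T h A j * eps j \<omega>) = (1 / real T) * ((\<Sum>j\<in>?J. (\<Sum>i\<in>A. (2 * nu T h i - 2 * mu T i) * wt K h i j) * eps j \<omega>) - (\<Sum>j\<in>?J. (if j \<in> A then 2 * nu T h j else 0) * eps j \<omega>))"
  proof -
    have "beta T h A j * eps j \<omega> = (1 / real T) * ((\<Sum>i\<in>A. (2 * nu T h i - 2 * mu T i) * wt K h i j) * eps j \<omega>) - (1 / real T) * ((if j \<in> A then 2 * nu T h j else 0) * eps j \<omega>)" for j
      unfolding beta_def by (simp add: algebra_simps)
    then show ?thesis by (simp add: sum_subtractf sum_distrib_left sum_divide_distrib[symmetric] diff_divide_distrib[symmetric])
  qed
  moreover have "(\<Sum>j\<in>?J. \<Sum>k\<in>?J. qq T h A j k * (eps j \<omega> * eps k \<omega>)) = (1 / real T) * ((\<Sum>j\<in>?J. \<Sum>k\<in>?J. (\<Sum>i\<in>A. wt K h i j * wt K h i k) * (eps j \<omega> * eps k \<omega>)) - 2 * (\<Sum>j\<in>?J. \<Sum>k\<in>?J. (if j \<in> A then wt K h j k else 0) * (eps j \<omega> * eps k \<omega>)))"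
  proof -
    have "qq T h A j k * (eps j \<omega> * eps k \<omega>) = (1 / real T) * ((\<Sum>i\<in>A. wt K h i j * wt K h i k) * (eps j \<omega> * eps k \<omega>)) - (1 / real T) * (2 * ((if j \<in> A then wt K h j k else 0) * (eps j \<omega> * eps k \<omega>)))" for j k
      unfolding qq_def by (simp add: algebra_simps)
    then show ?thesis by (simp add: sum_subtractf sum_distrib_left sum_divide_distrib[symmetric] diff_divide_distrib[symmetric])
  qed
  ultimately show ?thesis unfolding c0_def by (simp add: algebra_simps)
qed

end

context model begin

lemma var_le:
  fixes X :: "'a \<Rightarrow> real"
  assumes [measurable]: "X \<in> borel_measurable M"
    and iY: "integrable M (\<lambda>\<omega>. (X \<omega> - a)^2)"
  shows "integrable M X" "integrable M (\<lambda>\<omega>. (X \<omega>)^2)"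
    "(\<integral>\<omega>. (X \<omega> - (\<integral>\<omega>'. X \<omega>' \<partial>M))^2 \<partial>M) \<le> (\<integral>\<omega>. (X \<omega> - a)^2 \<partial>M)"
proof -
  have iY1: "integrable M (\<lambda>\<omega>. X \<omega> - a)"
  proof (rule int_bound[of "\<lambda>\<omega>. 1 + (X \<omega> - a)^2"])
    show "integrable M (\<lambda>\<omega>. 1 + (X \<omega> - a)^2)" using iY by simp
    show "(\<lambda>\<omega>. X \<omega> - a) \<in> borel_measurable M" by measurable
    fix \<omega> show "\<bar>X \<omega> - a\<bar> \<le> 1 + (X \<omega> - a)^2"
      by (rule abs_le_1_sq)
  qed
  show iX: "integrable M X"
  proof -
    have "integrable M (\<lambda>\<omega>. (X \<omega> - a) + a)" by (intro Bochner_Integration.integrable_add iY1 integrable_const)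
    then show ?thesis by simp
  qed
  have eq: "(\<lambda>\<omega>. (X \<omega>)^2) = (\<lambda>\<omega>. (X \<omega> - a)^2 + 2 * a * (X \<omega> - a) + a^2)"
    by (auto simp: power2_eq_square algebra_simps)
  show iX2: "integrable M (\<lambda>\<omega>. (X \<omega>)^2)"
    unfolding eq using iY iY1 by simp
  define c where "c = (\<integral>\<omega>. X \<omega> \<partial>M)"
  have gen: "(\<integral>\<omega>. (X \<omega> - d)^2 \<partial>M) = (\<integral>\<omega>. (X \<omega>)^2 \<partial>M) - 2 * d * c + d^2" for d
  proof -
    have "(\<lambda>\<omega>. (X \<omega> - d)^2) = (\<lambda>\<omega>. (X \<omega>)^2 - 2 * d * X \<omega> + d^2)"
      by (auto simp: power2_eq_square algebra_simps)
    then show ?thesis using iX iX2 by (simp add: c_def prob_space)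
  qed
  have "(\<integral>\<omega>. (X \<omega> - c)^2 \<partial>M) \<le> (\<integral>\<omega>. (X \<omega> - a)^2 \<partial>M)"
    unfolding gen
  proof -
    have "0 \<le> (a - c)^2" by simp
    then show "(\<integral>\<omega>. (X \<omega>)^2 \<partial>M) - 2 * c * c + c^2 \<le> (\<integral>\<omega>. (X \<omega>)^2 \<partial>M) - 2 * a * c + a^2"
      by (simp add: power2_eq_square algebra_simps)
  qed
  then show "(\<integral>\<omega>. (X \<omega> - (\<integral>\<omega>'. X \<omega>' \<partial>M))^2 \<partial>M) \<le> (\<integral>\<omega>. (X \<omega> - a)^2 \<partial>M)"
    unfolding c_def .
qed

lemma Gs_meas: "Gs T h A \<in> borel_measurable M"
  unfolding Gs_def mhat_def Yobs_def by measurable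

lemma beta_bound:
  assumes h: "0 < h" and A: "A \<subseteq> {1..T}" and T1: "1 \<le> T" and g: "0 \<le> \<gamma>"
    and wb: "\<And>i j. i \<in> A \<Longrightarrow> wt K h i j \<le> \<gamma> / real T"
  shows "\<bar>beta T h A j\<bar> \<le> (4 * B * \<gamma> + 2 * B) / real T"
proof -
  have cA: "real (card A) \<le> real T"
    using card_mono[OF _ A] by simp
  have Tp: "0 < real T" using T1 by simp
  have "\<bar>\<Sum>i\<in>A. (2 * nu T h i - 2 * mu T i) * wt K h i j\<bar> \<le> (\<Sum>i\<in>A. \<bar>(2 * nu T h i - 2 * mu T i) * wt K h i j\<bar>)"
    by (rule sum_abs)
  also have "\<dots> \<le> (\<Sum>i\<in>A. (4 * B) * (\<gamma> / real T))"
  proof (rule sum_mono)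
    fix i assume i: "i \<in> A"
    have "\<bar>2 * nu T h i - 2 * mu T i\<bar> \<le> 4 * B" using nu_bound[OF h, of T i] mu_bound[of T i] by linarith
    moreover have "0 \<le> wt K h i j" by (rule wt_nonneg[OF h Knn])
    ultimately have "\<bar>2 * nu T h i - 2 * mu T i\<bar> * wt K h i j \<le> (4 * B) * (\<gamma> / real T)"
      using wb[OF i, of j] B_nonneg by (intro mult_mono) auto
    then show "\<bar>(2 * nu T h i - 2 * mu T i) * wt K h i j\<bar> \<le> (4 * B) * (\<gamma> / real T)"
      using wt_nonneg[OF h Knn, where i=i and j=j] by (simp add: abs_mult)
  qed
  also have "\<dots> = real (card A) * ((4 * B) * (\<gamma> / real T))" by simp
  also have "\<dots> \<le> real T * ((4 * B) * (\<gamma> / real T))"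
    using cA B_nonneg g Tp by (intro mult_right_mono) auto
  also have "\<dots> = 4 * B * \<gamma>" using Tp by simp
  finally have s1: "\<bar>\<Sum>i\<in>A. (2 * nu T h i - 2 * mu T i) * wt K h i j\<bar> \<le> 4 * B * \<gamma>" .
  have s2: "\<bar>if j \<in> A then 2 * nu T h j else 0\<bar> \<le> 2 * B" using nu_bound[OF h, of T j] B_nonneg by auto
  have "\<bar>beta T h A j\<bar> = (1 / real T) * \<bar>(\<Sum>i\<in>A. (2 * nu T h i - 2 * mu T i) * wt K h i j) - (if j \<in> A then 2 * nu T h j else 0)\<bar>"
    unfolding beta_def using Tp by (simp add: abs_mult)
  also have "\<dots> \<le> (1 / real T) * (4 * B * \<gamma> + 2 * B)"
    using s1 s2 Tp by (intro mult_left_mono) auto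
  finally show ?thesis by simp
qed

lemma qq_bound:
  assumes h: "0 < h" and A: "A \<subseteq> {1..T}" and T1: "1 \<le> T" and g: "0 \<le> \<gamma>"
    and wb: "\<And>i j. i \<in> A \<Longrightarrow> wt K h i j \<le> \<gamma> / real T"
  shows "\<bar>qq T h A j k\<bar> \<le> (\<gamma>^2 + 2 * \<gamma>) / (real T)^2"
proof -
  have cA: "real (card A) \<le> real T"
    using card_mono[OF _ A] by simp
  have Tp: "0 < real T" using T1 by simp
  have w0: "\<And>i j. 0 \<le> wt K h i j" by (rule wt_nonneg[OF h Knn])
  define x where "x = (\<Sum>i\<in>A. wt K h i j * wt K h i k)"
  define y where "y = (if j \<in> A then 2 * wt K h j k else 0)"
  have x0: "0 \<le> x" unfolding x_def using w0 by (intro sum_nonneg) auto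
  have "x \<le> (\<Sum>i\<in>A. (\<gamma> / real T) * (\<gamma> / real T))"
    unfolding x_def using w0 wb g Tp by (intro sum_mono mult_mono) auto
  also have "\<dots> = real (card A) * ((\<gamma> / real T) * (\<gamma> / real T))" by simp
  also have "\<dots> \<le> real T * ((\<gamma> / real T) * (\<gamma> / real T))"
    using cA by (intro mult_right_mono) auto
  also have "\<dots> = \<gamma>^2 / real T" using Tp by (simp add: power2_eq_square)
  finally have x1: "x \<le> \<gamma>^2 / real T" .
  have y0: "0 \<le> y" unfolding y_def using w0 by auto
  have y1: "y \<le> 2 * \<gamma> / real T"
  proof (cases "j \<in> A")
    case True
    then have "wt K h j k \<le> \<gamma> / real T" using wb by blast
    then have "2 * wt K h j k \<le> 2 * (\<gamma> / real T)" by linarith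
    then show ?thesis using True unfolding y_def by simp
  next
    case False
    then show ?thesis unfolding y_def using g Tp by simp
  qed
  have "\<bar>qq T h A j k\<bar> = (1 / real T) * \<bar>x - y\<bar>"
    unfolding qq_def x_def y_def using Tp by (simp add: abs_mult)
  also have "\<dots> \<le> (1 / real T) * (\<gamma>^2 / real T + 2 * \<gamma> / real T)"
    using x0 x1 y0 y1 Tp by (intro mult_left_mono) auto
  also have "\<dots> = (\<gamma>^2 + 2 * \<gamma>) / (real T)^2"
    using Tp by (simp add: power2_eq_square field_simps)
  finally show ?thesis .
qed

definition "C1 \<gamma> = 2 * sig2 * (4 * B * \<gamma> + 2 * B)^2 + 2 * (2 * vv + 4 * sig2^2) * (\<gamma>^2 + 2 * \<gamma>)^2"

lemma Gs_var:
  assumes h: "0 < h" and A: "A \<subseteq> {1..T}" and T1: "1 \<le> T" and g: "0 \<le> \<gamma>"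
    and wb: "\<And>i j. i \<in> A \<Longrightarrow> wt K h i j \<le> \<gamma> / real T"
  shows "integrable M (Gs T h A)" "integrable M (\<lambda>\<omega>. (Gs T h A \<omega>)^2)"
    "(\<integral>\<omega>. (Gs T h A \<omega> - (\<integral>\<omega>'. Gs T h A \<omega>' \<partial>M))^2 \<partial>M) \<le> C1 \<gamma> / real T"
proof -
  let ?J = "{1..T}"
  have Tp: "0 < real T" using T1 by simp
  define a where "a = c0 T h A + sig2 * (\<Sum>j\<in>?J. qq T h A j j)"
  define L where "L \<omega> = (\<Sum>j\<in>?J. beta T h A j * eps j \<omega>)" for \<omega>
  define Q where "Q \<omega> = (\<Sum>j\<in>?J. \<Sum>k\<in>?J. qq T h A j k * (eps j \<omega> * eps k \<omega>)) - sig2 * (\<Sum>j\<in>?J. qq T h A j j)" for \<omega>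
  have eq: "Gs T h A \<omega> - a = L \<omega> + Q \<omega>" for \<omega>
    unfolding Gs_decomp[OF h A] a_def L_def Q_def by simp
  have iL: "integrable M (\<lambda>\<omega>. (L \<omega>)^2)" unfolding L_def by (rule lin_form(2)) simp
  have EL: "(\<integral>\<omega>. (L \<omega>)^2 \<partial>M) = sig2 * (\<Sum>j\<in>?J. (beta T h A j)^2)" unfolding L_def by (rule lin_form(1)) simp
  have iQ: "integrable M (\<lambda>\<omega>. (Q \<omega>)^2)" unfolding Q_def by (rule quad_form(2)) simp
  have EQ: "(\<integral>\<omega>. (Q \<omega>)^2 \<partial>M) \<le> (2 * vv + 4 * sig2^2) * (\<Sum>j\<in>?J. \<Sum>k\<in>?J. (qq T h A j k)^2)"
    unfolding Q_def by (rule quad_form(1)) simp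
  have bnd: "(L \<omega> + Q \<omega>)^2 \<le> 2 * (L \<omega>)^2 + 2 * (Q \<omega>)^2" for \<omega>
  proof -
    have "0 \<le> (L \<omega> - Q \<omega>)^2" by simp
    then show ?thesis by (simp add: power2_eq_square algebra_simps)
  qed
  have iGa: "integrable M (\<lambda>\<omega>. (Gs T h A \<omega> - a)^2)"
  proof (rule int_bound[of "\<lambda>\<omega>. 2 * (L \<omega>)^2 + 2 * (Q \<omega>)^2"])
    show "integrable M (\<lambda>\<omega>. 2 * (L \<omega>)^2 + 2 * (Q \<omega>)^2)" using iL iQ by simp
    show "(\<lambda>\<omega>. (Gs T h A \<omega> - a)^2) \<in> borel_measurable M" using Gs_meas by measurable
    fix \<omega> show "\<bar>(Gs T h A \<omega> - a)^2\<bar> \<le> 2 * (L \<omega>)^2 + 2 * (Q \<omega>)^2" using bnd[of \<omega>] eq[of \<omega>] by simp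
  qed
  note V = var_le[OF Gs_meas iGa]
  show "integrable M (Gs T h A)" by (rule V(1))
  show "integrable M (\<lambda>\<omega>. (Gs T h A \<omega>)^2)" by (rule V(2))
  have sb: "(\<Sum>j\<in>?J. (beta T h A j)^2) \<le> (4 * B * \<gamma> + 2 * B)^2 / real T"
  proof -
    have "(\<Sum>j\<in>?J. (beta T h A j)^2) \<le> real (card ?J) * ((4 * B * \<gamma> + 2 * B) / real T)^2"
    proof (rule sum_bounded_above)
      fix j
      have "\<bar>beta T h A j\<bar> \<le> (4 * B * \<gamma> + 2 * B) / real T" by (rule beta_bound[OF h A T1 g wb])
      then have "\<bar>beta T h A j\<bar>^2 \<le> ((4 * B * \<gamma> + 2 * B) / real T)^2"
        by (intro power_mono) auto
      then show "(beta T h A j)^2 \<le> ((4 * B * \<gamma> + 2 * B) / real T)^2" by simp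
    qed
    also have "\<dots> = (4 * B * \<gamma> + 2 * B)^2 / real T" using Tp by (simp add: power2_eq_square)
    finally show ?thesis .
  qed
  have sq: "(\<Sum>j\<in>?J. \<Sum>k\<in>?J. (qq T h A j k)^2) \<le> (\<gamma>^2 + 2 * \<gamma>)^2 / real T"
  proof -
    have q1: "(qq T h A j k)^2 \<le> ((\<gamma>^2 + 2 * \<gamma>) / (real T)^2)^2" for j k
    proof -
      have "\<bar>qq T h A j k\<bar> \<le> (\<gamma>^2 + 2 * \<gamma>) / (real T)^2" by (rule qq_bound[OF h A T1 g wb])
      then have "\<bar>qq T h A j k\<bar>^2 \<le> ((\<gamma>^2 + 2 * \<gamma>) / (real T)^2)^2"
        by (intro power_mono) auto
      then show ?thesis by simp
    qed
    have "(\<Sum>j\<in>?J. \<Sum>k\<in>?J. (qq T h A j k)^2) \<le> (\<Sum>j\<in>?J. real (card ?J) * ((\<gamma>^2 + 2 * \<gamma>) / (real T)^2)^2)"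
      by (intro sum_mono sum_bounded_above q1)
    also have "\<dots> = real T * (real T * ((\<gamma>^2 + 2 * \<gamma>) / (real T)^2)^2)" by simp
    also have "\<dots> = (\<gamma>^2 + 2 * \<gamma>)^2 / (real T)^2" using Tp by (simp add: power2_eq_square field_simps)
    also have "\<dots> \<le> (\<gamma>^2 + 2 * \<gamma>)^2 / real T"
    proof -
      have "real T \<le> (real T)^2" using T1 by (simp add: power2_eq_square)
      then show ?thesis using Tp by (intro divide_left_mono) auto
    qed
    finally show ?thesis .
  qed
  have "(\<integral>\<omega>. (Gs T h A \<omega> - (\<integral>\<omega>'. Gs T h A \<omega>' \<partial>M))^2 \<partial>M) \<le> (\<integral>\<omega>. (Gs T h A \<omega> - a)^2 \<partial>M)"
    by (rule V(3))
  also have "\<dots> \<le> (\<integral>\<omega>. 2 * (L \<omega>)^2 + 2 * (Q \<omega>)^2 \<partial>M)"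
    by (rule integral_mono) (use iGa iL iQ bnd eq in auto)
  also have "\<dots> = 2 * (sig2 * (\<Sum>j\<in>?J. (beta T h A j)^2)) + 2 * (\<integral>\<omega>. (Q \<omega>)^2 \<partial>M)"
    using iL iQ EL by simp
  also have "\<dots> \<le> 2 * (sig2 * ((4 * B * \<gamma> + 2 * B)^2 / real T)) + 2 * ((2 * vv + 4 * sig2^2) * ((\<gamma>^2 + 2 * \<gamma>)^2 / real T))"
  proof -
    have "sig2 * (\<Sum>j\<in>?J. (beta T h A j)^2) \<le> sig2 * ((4 * B * \<gamma> + 2 * B)^2 / real T)"
      using sb sig2_nonneg by (intro mult_left_mono) auto
    moreover have "(2 * vv + 4 * sig2^2) * (\<Sum>j\<in>?J. \<Sum>k\<in>?J. (qq T h A j k)^2) \<le> (2 * vv + 4 * sig2^2) * ((\<gamma>^2 + 2 * \<gamma>)^2 / real T)"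
      using sq vv_nonneg by (intro mult_left_mono) auto
    ultimately show ?thesis using EQ by linarith
  qed
  also have "\<dots> = C1 \<gamma> / real T" unfolding C1_def using Tp by (simp add: field_simps)
  finally show "(\<integral>\<omega>. (Gs T h A \<omega> - (\<integral>\<omega>'. Gs T h A \<omega>' \<partial>M))^2 \<partial>M) \<le> C1 \<gamma> / real T" .
qed

end

context model begin

definition "mu4 = (\<integral>\<omega>. (eps 0 \<omega>)^4 \<partial>M)"
definition "C0 = 3 * (36 * B^4 + 20 * mu4)"

lemma mom4: "(\<integral>\<omega>. (eps n \<omega>)^4 \<partial>M) = mu4"
  unfolding mu4_def using transfer_integral[of "\<lambda>x. x^4" n] by simp

lemma mu4_nonneg: "0 \<le> mu4" unfolding mu4_def by simp

lemma Gs_crude: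
  assumes h: "0 < h" and A: "A \<subseteq> {1..T}" and T1: "1 \<le> T"
  shows "integrable M (\<lambda>\<omega>. (Gs T h A \<omega>)^2)" "integrable M (Gs T h A)"
    "(\<integral>\<omega>. (Gs T h A \<omega>)^2 \<partial>M) \<le> (real (card A) / real T)^2 * C0"
proof -
  let ?J = "{1..T}"
  have Tp: "0 < real T" using T1 by simp
  have finA: "finite A" using A finite_subset by blast
  have w0: "\<And>i j. 0 \<le> wt K h i j" by (rule wt_nonneg[OF h Knn])
  have ws: "\<And>i. (\<Sum>j\<in>?J. wt K h i j) \<le> 1" by (rule wt_sum[OF h Knn])
  define S where "S i \<omega> = (\<Sum>j\<in>?J. wt K h i j * (eps j \<omega>)^2)" for i \<omega>
  define R' where "R' i \<omega> = 3 * (36 * B^4 + 4 * (eps i \<omega>)^4 + 16 * (\<Sum>j\<in>?J. wt K h i j * (eps j \<omega>)^4))" for i \<omega>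
  define Z where "Z i \<omega> = - 2 * (Yobs m eps T i \<omega> * mhat K m eps T h i \<omega>) + (mhat K m eps T h i \<omega>)^2" for i \<omega>
  define U where "U \<omega> = (real (card A) / (real T)^2) * (\<Sum>i\<in>A. R' i \<omega>)" for \<omega>
  have Ysq: "(Yobs m eps T j \<omega>)^2 \<le> 2 * B^2 + 2 * (eps j \<omega>)^2" for j \<omega>
  proof -
    have "\<bar>mu T j\<bar>^2 \<le> B^2" using mu_bound[of T j] by (intro power_mono) auto
    then have "(mu T j)^2 \<le> B^2" by simp
    then have "2 * ((mu T j)^2 + (eps j \<omega>)^2) \<le> 2 * B^2 + 2 * (eps j \<omega>)^2" by simp
    then show ?thesis unfolding Y_mu using sq2[of "mu T j" "eps j \<omega>"] by (rule order_trans[rotated])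
  qed
  have Zb: "Z i \<omega> ^ 2 \<le> R' i \<omega>" if i: "i \<in> A" for i \<omega>
  proof -
    have iT: "i \<le> T" using i A by auto
    have mh: "(mhat K m eps T h i \<omega>)^2 \<le> 2 * B^2 + 2 * S i \<omega>"
    proof -
      have "(mhat K m eps T h i \<omega>)^2 \<le> (\<Sum>j\<in>?J. wt K h i j * (Yobs m eps T j \<omega>)^2)"
        unfolding mhat_wt[OF iT] by (rule weighted_sq) (use w0 ws in auto)
      also have "\<dots> \<le> (\<Sum>j\<in>?J. wt K h i j * (2 * B^2 + 2 * (eps j \<omega>)^2))"
        using w0 Ysq by (intro sum_mono mult_left_mono) auto
      also have "\<dots> = 2 * B^2 * (\<Sum>j\<in>?J. wt K h i j) + 2 * S i \<omega>"
        unfolding S_def by (simp add: sum.distrib sum_distrib_left sum_distrib_right algebra_simps)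
      also have "\<dots> \<le> 2 * B^2 * 1 + 2 * S i \<omega>"
        using ws[of i] by (intro add_right_mono mult_left_mono) auto
      finally show ?thesis by simp
    qed
    have "\<bar>Z i \<omega>\<bar> \<le> (Yobs m eps T i \<omega>)^2 + 2 * (mhat K m eps T h i \<omega>)^2"
    proof -
      have "\<bar>2 * (Yobs m eps T i \<omega> * mhat K m eps T h i \<omega>)\<bar> \<le> (Yobs m eps T i \<omega>)^2 + (mhat K m eps T h i \<omega>)^2"
        using amgm2[of "Yobs m eps T i \<omega>" "mhat K m eps T h i \<omega>"] by (simp add: abs_mult)
      moreover have "\<bar>Z i \<omega>\<bar> \<le> \<bar>- 2 * (Yobs m eps T i \<omega> * mhat K m eps T h i \<omega>)\<bar> + \<bar>(mhat K m eps T h i \<omega>)^2\<bar>"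
        unfolding Z_def by (rule abs_triangle_ineq)
      ultimately show ?thesis by simp
    qed
    also have "\<dots> \<le> (2 * B^2 + 2 * (eps i \<omega>)^2) + 2 * (2 * B^2 + 2 * S i \<omega>)"
      using Ysq[of i \<omega>] mh by (intro add_mono mult_left_mono) auto
    also have "\<dots> = 6 * B^2 + 2 * (eps i \<omega>)^2 + 4 * S i \<omega>" by simp
    finally have z1: "\<bar>Z i \<omega>\<bar> \<le> 6 * B^2 + 2 * (eps i \<omega>)^2 + 4 * S i \<omega>" .
    have "Z i \<omega> ^ 2 = \<bar>Z i \<omega>\<bar>^2" by simp
    also have "\<dots> \<le> (6 * B^2 + 2 * (eps i \<omega>)^2 + 4 * S i \<omega>)^2"
      using z1 by (intro power_mono) auto
    also have "\<dots> \<le> 3 * ((6 * B^2)^2 + (2 * (eps i \<omega>)^2)^2 + (4 * S i \<omega>)^2)" by (rule sq3)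
    also have "\<dots> \<le> R' i \<omega>"
    proof -
      have "(S i \<omega>)^2 \<le> (\<Sum>j\<in>?J. wt K h i j * ((eps j \<omega>)^2)^2)"
        unfolding S_def by (rule weighted_sq) (use w0 ws in auto)
      then have "(S i \<omega>)^2 \<le> (\<Sum>j\<in>?J. wt K h i j * (eps j \<omega>)^4)"
        by (simp add: power_mult[symmetric])
      then show ?thesis unfolding R'_def
        by (simp add: power_mult_distrib power_mult[symmetric])
    qed
    finally show ?thesis .
  qed
  have GZ: "Gs T h A \<omega> = (1 / real T) * (\<Sum>i\<in>A. Z i \<omega>)" for \<omega>
    unfolding Gs_def Z_def by (simp add: sum.distrib sum_subtractf sum_distrib_left[symmetric] algebra_simps)
  have GU: "(Gs T h A \<omega>)^2 \<le> U \<omega>" for \<omega>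
  proof -
    have "(Gs T h A \<omega>)^2 = (1 / real T)^2 * (\<Sum>i\<in>A. Z i \<omega>)^2" unfolding GZ by (rule power_mult_distrib)
    also have "\<dots> \<le> (1 / real T)^2 * (real (card A) * (\<Sum>i\<in>A. (Z i \<omega>)^2))"
      by (intro mult_left_mono sum_sq_card finA) auto
    also have "\<dots> \<le> (1 / real T)^2 * (real (card A) * (\<Sum>i\<in>A. R' i \<omega>))"
      using Zb by (intro mult_left_mono sum_mono) auto
    also have "\<dots> = U \<omega>" unfolding U_def by (simp add: power_divide)
    finally show ?thesis .
  qed
  have iR: "integrable M (R' i)" for i
    unfolding R'_def by (intro Bochner_Integration.integrable_mult_right Bochner_Integration.integrable_add
        integrable_const int4 Bochner_Integration.integrable_sum) 
  have iU: "integrable M U" unfolding U_def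
    by (intro Bochner_Integration.integrable_mult_right Bochner_Integration.integrable_sum iR)
  have ER: "(\<integral>\<omega>. R' i \<omega> \<partial>M) \<le> C0" for i
  proof -
    have "(\<integral>\<omega>. R' i \<omega> \<partial>M) = 3 * (36 * B^4 + 4 * mu4 + 16 * (\<Sum>j\<in>?J. wt K h i j * mu4))"
      unfolding R'_def using int4 by (simp add: mom4 prob_space)
    also have "\<dots> \<le> 3 * (36 * B^4 + 4 * mu4 + 16 * mu4)"
    proof -
      have "(\<Sum>j\<in>?J. wt K h i j * mu4) = (\<Sum>j\<in>?J. wt K h i j) * mu4" by (simp add: sum_distrib_right)
      also have "\<dots> \<le> 1 * mu4" using ws[of i] mu4_nonneg by (intro mult_right_mono) auto
      finally show ?thesis by simp
    qed
    also have "\<dots> = C0" unfolding C0_def by simp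
    finally show ?thesis .
  qed
  show iG2: "integrable M (\<lambda>\<omega>. (Gs T h A \<omega>)^2)"
  proof (rule int_bound[OF iU])
    show "(\<lambda>\<omega>. (Gs T h A \<omega>)^2) \<in> borel_measurable M" using Gs_meas by measurable
    fix \<omega> show "\<bar>(Gs T h A \<omega>)^2\<bar> \<le> U \<omega>" using GU[of \<omega>] by simp
  qed
  show "integrable M (Gs T h A)"
  proof (rule int_bound[of "\<lambda>\<omega>. 1 + (Gs T h A \<omega>)^2"])
    show "integrable M (\<lambda>\<omega>. 1 + (Gs T h A \<omega>)^2)" using iG2 by simp
    show "Gs T h A \<in> borel_measurable M" by (rule Gs_meas)
    fix \<omega> show "\<bar>Gs T h A \<omega>\<bar> \<le> 1 + (Gs T h A \<omega>)^2" by (rule abs_le_1_sq)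
  qed
  have "(\<integral>\<omega>. (Gs T h A \<omega>)^2 \<partial>M) \<le> (\<integral>\<omega>. U \<omega> \<partial>M)"
    by (rule integral_mono[OF iG2 iU GU])
  also have "\<dots> = (real (card A) / (real T)^2) * (\<Sum>i\<in>A. (\<integral>\<omega>. R' i \<omega> \<partial>M))"
    unfolding U_def using iR by simp
  also have "\<dots> \<le> (real (card A) / (real T)^2) * (\<Sum>i\<in>A. C0)"
    using ER by (intro mult_left_mono sum_mono) auto
  also have "\<dots> = (real (card A) / real T)^2 * C0" by (simp add: power2_eq_square)
  finally show "(\<integral>\<omega>. (Gs T h A \<omega>)^2 \<partial>M) \<le> (real (card A) / real T)^2 * C0" .
qed

end

lemma sum_reflect:
  "(\<Sum>j = 1..i - 1. f (i - j)) = (\<Sum>k = 1..i - 1. f k)" for f :: "nat \<Rightarrow> real"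
  by (rule sum.reindex_bij_witness[where i="\<lambda>k. i - k" and j="\<lambda>j. i - j"]) auto

lemma wt_bound:
  assumes h: "0 < h" and Knn: "\<And>x. 0 \<le> x \<Longrightarrow> 0 \<le> K x"
    and KM: "\<And>x. 0 \<le> x \<Longrightarrow> K x \<le> KM"
    and kap: "\<And>x. a \<le> x \<Longrightarrow> x \<le> b \<Longrightarrow> \<kappa> \<le> K x" and k0: "0 < \<kappa>" and a0: "0 < a"
    and cnt: "2 \<le> (b - a) * h" and ib: "b * h \<le> real (i - 1)"
  shows "wt K h i j \<le> 2 * KM / (\<kappa> * (b - a) * h)"
proof -
  have KM0: "0 \<le> KM" using Knn[of 0] KM[of 0] by simp
  define SK where "SK = (\<Sum>j = 1..i - 1. K (real (i - j) / h))"
  have hN: "h * Nloo K h i = SK" unfolding Nloo_def SK_def using h by simp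
  have SK': "SK = (\<Sum>k = 1..i - 1. K (real k / h))"
    unfolding SK_def by (rule sum_reflect[where f="\<lambda>k. K (real k / h)"])
  define L where "L = nat \<lceil>a * h\<rceil>"
  define U where "U = nat \<lfloor>b * h\<rfloor>"
  have ah: "0 < a * h" using a0 h by simp
  have L1: "1 \<le> L" unfolding L_def using ah by linarith
  have Lr: "real L \<le> a * h + 1" unfolding L_def using ah by linarith
  have Lr2: "a * h \<le> real L" unfolding L_def using ah by linarith
  have cnt': "2 \<le> b * h - a * h" using cnt by (simp add: algebra_simps)
  have bh0: "0 \<le> b * h" using cnt' ah by linarith
  have Ur: "b * h - 1 \<le> real U" unfolding U_def using bh0 by linarith
  have Ur2: "real U \<le> b * h" unfolding U_def using bh0 by linarith
  have Ui: "U \<le> i - 1" using Ur2 ib by linarith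
  have LU: "L \<le> U" using Lr Ur cnt' by linarith
  have sub: "{L..U} \<subseteq> {1..i-1}" using L1 Ui by auto
  have "real (card {L..U}) * \<kappa> \<le> (\<Sum>k\<in>{L..U}. K (real k / h))"
  proof -
    have "(\<Sum>k\<in>{L..U}. \<kappa>) \<le> (\<Sum>k\<in>{L..U}. K (real k / h))"
    proof (rule sum_mono)
      fix k assume k: "k \<in> {L..U}"
      have "a * h \<le> real k" using k Lr2 by auto
      then have "a \<le> real k / h" using h by (simp add: field_simps)
      moreover have "real k \<le> b * h" using k Ur2 by auto
      then have "real k / h \<le> b" using h by (simp add: field_simps)
      ultimately show "\<kappa> \<le> K (real k / h)" using kap by simp
    qed
    then show ?thesis by simp
  qed
  also have "\<dots> \<le> (\<Sum>k = 1..i - 1. K (real k / h))"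
    using sub h by (intro sum_mono2) (auto intro: Knn)
  finally have c1: "real (card {L..U}) * \<kappa> \<le> SK" unfolding SK' .
  have "real (card {L..U}) = real U + 1 - real L" using LU by simp
  also have "\<dots> \<ge> (b - a) * h / 2" using Lr Ur cnt' by (simp add: algebra_simps) argo
  finally have c2: "(b - a) * h / 2 \<le> real (card {L..U})" .
  have pos: "0 < (b - a) * h / 2 * \<kappa>" using cnt k0 by simp
  have SKb: "(b - a) * h / 2 * \<kappa> \<le> SK" using c1 c2 k0 by (meson mult_right_mono order_trans less_imp_le)
  then have SKp: "0 < SK" using pos by linarith
  show ?thesis
  proof (cases "1 \<le> j \<and> j < i")
    case True
    have "wt K h i j = K (real (i - j) / h) / SK" unfolding wt_def using True hN by simp
    also have "\<dots> \<le> KM / SK" using KM[of "real (i - j) / h"] h SKp by (intro divide_right_mono) auto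
    also have "\<dots> \<le> KM / ((b - a) * h / 2 * \<kappa>)" using KM0 pos SKb by (intro divide_left_mono) auto
    also have "\<dots> = 2 * KM / (\<kappa> * (b - a) * h)" by (simp add: field_simps)
    finally show ?thesis .
  next
    case False
    then have "wt K h i j = 0" unfolding wt_def by (rule if_not_P)
    moreover have "0 \<le> 2 * KM / (\<kappa> * (b - a) * h)" using KM0 pos by (simp add: mult.commute mult.left_commute)
    ultimately show ?thesis by simp
  qed
qed

context model begin

lemma int_sq_shift:
  fixes X :: "'a \<Rightarrow> real"
  assumes "integrable M X" "integrable M (\<lambda>\<omega>. (X \<omega>)^2)"
  shows "integrable M (\<lambda>\<omega>. (X \<omega> - c)^2)"
proof -
  have "(\<lambda>\<omega>. (X \<omega> - c)^2) = (\<lambda>\<omega>. (X \<omega>)^2 - 2 * c * X \<omega> + c^2)"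
    by (auto simp: power2_eq_square algebra_simps)
  then show ?thesis using assms by simp
qed

lemma C0_nonneg: "0 \<le> C0" unfolding C0_def using mu4_nonneg by simp

lemma main_bound:
  fixes n :: "nat \<Rightarrow> nat" and Ks :: "nat set"
  assumes T1: "1 \<le> T" and h: "0 < h" and I0: "1 \<le> I0" "I0 \<le> T"
    and nI: "\<And>k. k \<in> Ks \<Longrightarrow> I0 \<le> n k \<and> n k \<le> T"
    and fin: "finite Ks" and g: "0 \<le> \<gamma>"
    and wb: "\<And>i j. I0 < i \<Longrightarrow> wt K h i j \<le> \<gamma> / real T"
    and dT: "real I0 \<le> \<delta> * real T"
  shows "(\<integral>\<omega>. Max (insert 0 ((\<lambda>k. \<bar>Gs T h {2..n k} \<omega> - (\<integral>\<omega>'. Gs T h {2..n k} \<omega>' \<partial>M)\<bar>^2) ` Ks)) \<partial>M)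
          \<le> 2 * \<delta>^2 * C0 + 2 * real (card Ks) * (C1 \<gamma> / real T)"
proof -
  have Tp: "0 < real T" using T1 by simp
  define G1 where "G1 = Gs T h {2..I0}"
  define G2 where "G2 k = Gs T h {I0+1..n k}" for k
  define W where "W \<omega> = G1 \<omega> - (\<integral>\<omega>'. G1 \<omega>' \<partial>M)" for \<omega>
  define V where "V k \<omega> = G2 k \<omega> - (\<integral>\<omega>'. G2 k \<omega>' \<partial>M)" for k \<omega>
  have A1: "{2..I0} \<subseteq> {1..T}" using I0 by auto
  have A2: "{I0+1..n k} \<subseteq> {1..T}" if "k \<in> Ks" for k using nI[OF that] by auto
  note cr = Gs_crude[OF h A1 T1]
  have vr0: "integrable M (Gs T h {I0+1..n k}) \<and> integrable M (\<lambda>\<omega>. (Gs T h {I0+1..n k} \<omega>)^2)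
     \<and> (\<integral>\<omega>. (Gs T h {I0+1..n k} \<omega> - (\<integral>\<omega>'. Gs T h {I0+1..n k} \<omega>' \<partial>M))^2 \<partial>M) \<le> C1 \<gamma> / real T"
    if "k \<in> Ks" for k
  proof -
    have w: "\<And>i j. i \<in> {I0+1..n k} \<Longrightarrow> wt K h i j \<le> \<gamma> / real T" using wb by auto
    show ?thesis using Gs_var[OF h A2[OF that] T1 g w] by blast
  qed
  have vr: "integrable M (Gs T h {I0+1..n k})" "integrable M (\<lambda>\<omega>. (Gs T h {I0+1..n k} \<omega>)^2)"
     "(\<integral>\<omega>. (Gs T h {I0+1..n k} \<omega> - (\<integral>\<omega>'. Gs T h {I0+1..n k} \<omega>' \<partial>M))^2 \<partial>M) \<le> C1 \<gamma> / real T"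
    if "k \<in> Ks" for k using vr0[OF that] by auto
  have split: "Gs T h {2..n k} \<omega> = G1 \<omega> + G2 k \<omega>" if "k \<in> Ks" for k \<omega>
  proof -
    have "{2..n k} = {2..I0} \<union> {I0+1..n k}" using nI[OF that] I0 by auto
    then show ?thesis unfolding G1_def G2_def by (simp add: Gs_union)
  qed
  have Esplit: "(\<integral>\<omega>. Gs T h {2..n k} \<omega> \<partial>M) = (\<integral>\<omega>. G1 \<omega> \<partial>M) + (\<integral>\<omega>. G2 k \<omega> \<partial>M)" if "k \<in> Ks" for k
    using split[OF that] cr(2) vr(1)[OF that] unfolding G1_def G2_def by simp
  have pw: "Max (insert 0 ((\<lambda>k. \<bar>Gs T h {2..n k} \<omega> - (\<integral>\<omega>'. Gs T h {2..n k} \<omega>' \<partial>M)\<bar>^2) ` Ks))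
      \<le> 2 * (W \<omega>)^2 + 2 * (\<Sum>k\<in>Ks. (V k \<omega>)^2)" for \<omega>
  proof (subst Max_le_iff, goal_cases)
    case 1 show ?case using fin by simp
  next
    case 2 show ?case by simp
  next
    case 3
    have s0: "0 \<le> (\<Sum>k\<in>Ks. (V k \<omega>)^2)" by (intro sum_nonneg) auto
    show ?case
    proof (intro ballI, elim insertE imageE)
      fix x :: real assume "x = 0" then show "x \<le> 2 * (W \<omega>)^2 + 2 * (\<Sum>k\<in>Ks. (V k \<omega>)^2)" using s0 by simp
    next
      fix x :: real and k assume x: "x = \<bar>Gs T h {2..n k} \<omega> - (\<integral>\<omega>'. Gs T h {2..n k} \<omega>' \<partial>M)\<bar>^2" and k: "k \<in> Ks"
      have E: "(\<integral>\<omega>'. Gs T h {2..n k} \<omega>' \<partial>M) = (\<integral>\<omega>. G1 \<omega> \<partial>M) + (\<integral>\<omega>. G2 k \<omega> \<partial>M)"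
        by (rule Esplit[OF k])
      have "x = (G1 \<omega> + G2 k \<omega> - ((\<integral>\<omega>. G1 \<omega> \<partial>M) + (\<integral>\<omega>. G2 k \<omega> \<partial>M)))^2"
        unfolding x E split[OF k] by simp
      also have "\<dots> = (W \<omega> + V k \<omega>)^2" unfolding W_def V_def by (simp add: algebra_simps)
      finally have "x = (W \<omega> + V k \<omega>)^2" .
      also have "\<dots> \<le> 2 * ((W \<omega>)^2 + (V k \<omega>)^2)" by (rule sq2)
      also have "(V k \<omega>)^2 \<le> (\<Sum>k\<in>Ks. (V k \<omega>)^2)"
        using k fin by (intro member_le_sum) auto
      then have "2 * ((W \<omega>)^2 + (V k \<omega>)^2) \<le> 2 * (W \<omega>)^2 + 2 * (\<Sum>k\<in>Ks. (V k \<omega>)^2)" by simp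
      finally show "x \<le> 2 * (W \<omega>)^2 + 2 * (\<Sum>k\<in>Ks. (V k \<omega>)^2)" .
    qed
  qed
  have iW: "integrable M (\<lambda>\<omega>. (W \<omega>)^2)" unfolding W_def G1_def by (rule int_sq_shift[OF cr(2) cr(1)])
  have iV: "integrable M (\<lambda>\<omega>. (V k \<omega>)^2)" if "k \<in> Ks" for k
    unfolding V_def G2_def by (rule int_sq_shift[OF vr(1)[OF that] vr(2)[OF that]])
  have iR: "integrable M (\<lambda>\<omega>. 2 * (W \<omega>)^2 + 2 * (\<Sum>k\<in>Ks. (V k \<omega>)^2))"
    using iW iV by (intro Bochner_Integration.integrable_add Bochner_Integration.integrable_mult_right
        Bochner_Integration.integrable_sum) auto
  have "(\<integral>\<omega>. Max (insert 0 ((\<lambda>k. \<bar>Gs T h {2..n k} \<omega> - (\<integral>\<omega>'. Gs T h {2..n k} \<omega>' \<partial>M)\<bar>^2) ` Ks)) \<partial>M)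
      \<le> (\<integral>\<omega>. 2 * (W \<omega>)^2 + 2 * (\<Sum>k\<in>Ks. (V k \<omega>)^2) \<partial>M)"
  proof (rule integral_mono'[OF iR])
    fix \<omega> show "Max (insert 0 ((\<lambda>k. \<bar>Gs T h {2..n k} \<omega> - (\<integral>\<omega>'. Gs T h {2..n k} \<omega>' \<partial>M)\<bar>^2) ` Ks)) \<le> 2 * (W \<omega>)^2 + 2 * (\<Sum>k\<in>Ks. (V k \<omega>)^2)"
      by (rule pw)
    have "0 \<le> (\<Sum>k\<in>Ks. (V k \<omega>)^2)" by (intro sum_nonneg) auto
    then show "0 \<le> 2 * (W \<omega>)^2 + 2 * (\<Sum>k\<in>Ks. (V k \<omega>)^2)" by simp
  qed
  also have "\<dots> = 2 * (\<integral>\<omega>. (W \<omega>)^2 \<partial>M) + 2 * (\<Sum>k\<in>Ks. (\<integral>\<omega>. (V k \<omega>)^2 \<partial>M))"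
    using iW iV by (simp add: Bochner_Integration.integral_sum Bochner_Integration.integrable_sum)
  also have "\<dots> \<le> 2 * (\<delta>^2 * C0) + 2 * (\<Sum>k\<in>Ks. C1 \<gamma> / real T)"
  proof -
    have "(\<integral>\<omega>. (W \<omega>)^2 \<partial>M) \<le> (\<integral>\<omega>. (G1 \<omega> - 0)^2 \<partial>M)"
      unfolding W_def G1_def by (rule var_le(3)[OF Gs_meas]) (use cr(1) in simp)
    also have "\<dots> \<le> (real (card {2..I0}) / real T)^2 * C0" unfolding G1_def using cr(3) by simp
    also have "\<dots> \<le> \<delta>^2 * C0"
    proof -
      have "real (card {2..I0}) \<le> real I0" by simp
      also have "\<dots> \<le> \<delta> * real T" by (rule dT)
      finally have "real (card {2..I0}) / real T \<le> \<delta>" using Tp by (simp add: divide_le_eq)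
      then have "(real (card {2..I0}) / real T)^2 \<le> \<delta>^2" by (intro power_mono) auto
      then show ?thesis using C0_nonneg by (intro mult_right_mono) auto
    qed
    finally have w: "(\<integral>\<omega>. (W \<omega>)^2 \<partial>M) \<le> \<delta>^2 * C0" .
    have v: "(\<Sum>k\<in>Ks. (\<integral>\<omega>. (V k \<omega>)^2 \<partial>M)) \<le> (\<Sum>k\<in>Ks. C1 \<gamma> / real T)"
      unfolding V_def G2_def using vr(3) by (intro sum_mono) auto
    show ?thesis using w v by linarith
  qed
  also have "\<dots> = 2 * \<delta>^2 * C0 + 2 * real (card Ks) * (C1 \<gamma> / real T)" by simp
  finally show ?thesis .
qed

end

lemma s_mono_aux:
  assumes s_incr: "\<And>i. 1 \<le> i \<Longrightarrow> i < n \<Longrightarrow> s i < s (Suc i)"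
  shows "1 \<le> i \<Longrightarrow> i + d \<le> n \<Longrightarrow> (s i :: real) \<le> s (i + d)"
proof (induction d)
  case 0 then show ?case by simp
next
  case (Suc d)
  then have "s i \<le> s (i + d)" by simp
  also have "\<dots> < s (Suc (i + d))" using Suc.prems by (intro s_incr) auto
  finally show ?case by simp
qed

lemma s_bounds:
  fixes s :: "nat \<Rightarrow> nat \<Rightarrow> real"
  assumes s_first: "\<And>n. 1 \<le> n \<Longrightarrow> s0 < s n 1"
    and s_incr: "\<And>n i. 1 \<le> i \<Longrightarrow> i < n \<Longrightarrow> s n i < s n (Suc i)"
    and s_last: "\<And>n. 1 \<le> n \<Longrightarrow> s n n \<le> 1"
    and k: "1 \<le> k" "k \<le> n"
  shows "s0 < s n k" "s n k \<le> 1"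
proof -
  have "s n 1 \<le> s n (1 + (k - 1))" using k by (intro s_mono_aux[of n "s n"] s_incr) auto
  then show "s0 < s n k" using s_first[of n] k by simp
  have "s n k \<le> s n (k + (n - k))" using k by (intro s_mono_aux[of n "s n"] s_incr) auto
  then show "s n k \<le> 1" using s_last[of n] k by simp
qed

theorem theorem3:
  fixes M :: "'a measure"
    and eps :: "nat \<Rightarrow> 'a \<Rightarrow> real"
    and m K :: "real \<Rightarrow> real"
    and h :: "nat \<Rightarrow> real"
    and N :: "nat \<Rightarrow> nat"
    and s :: "nat \<Rightarrow> nat \<Rightarrow> real"
    and s0 \<xi> :: real
  assumes s0: "0 < s0" "s0 < 1"
    and xi: "1 \<le> \<xi>"
    and N_mono: "mono N"
    and N_small: "(\<lambda>T. real (N T) / real T) \<in> o(\<lambda>_. 1)"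
    and s_first: "\<And>n. 1 \<le> n \<Longrightarrow> s0 < s n 1"
    and s_incr: "\<And>n i. 1 \<le> i \<Longrightarrow> i < n \<Longrightarrow> s n i < s n (Suc i)"
    and s_last: "\<And>n. 1 \<le> n \<Longrightarrow> s n n \<le> 1"
    and m_lip: "\<exists>L. L-lipschitz_on {0..} m"
    and m_bdd: "bounded (m ` {0..})"
    and m_sign: "(\<forall>x\<ge>0. m x > 0) \<or> (\<forall>x\<ge>0. m x < 0)"
    and M: "prob_space M"
    and eps_meas: "\<And>n. eps n \<in> borel_measurable M"
    and eps_indep: "prob_space.indep_vars M (\<lambda>_. borel) eps UNIV"
    and eps_id: "\<And>n. distr M borel (eps n) = distr M borel (eps 0)"
    and eps_int: "integrable M (eps 0)"
    and eps_mean: "(\<integral>\<omega>. eps 0 \<omega> \<partial>M) = 0"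
    and eps_4th: "integrable M (\<lambda>\<omega>. (eps 0 \<omega>) ^ 4)"
    and K_lip: "\<exists>L. L-lipschitz_on {0..} K"
    and K_nonneg: "\<And>x. 0 \<le> x \<Longrightarrow> 0 \<le> K x"
    and K_bdd: "bounded (K ` {0..})"
    and K_supp: "\<And>x. 1 < x \<Longrightarrow> K x = 0"
    and K_pos: "\<And>x. 0 < x \<Longrightarrow> x < 1 \<Longrightarrow> 0 < K x"
    and h_pos: "\<And>T. 1 \<le> T \<Longrightarrow> 0 < h T"
    and h_rate: "(\<lambda>T. real T / h T - \<xi>) \<in> O(\<lambda>T. 1 / real T)"
  shows "(\<lambda>T. \<integral>\<omega>. Max (insert 0 ((\<lambda>i. \<bar>CTs K m eps T (h T) (s (N T) i) \<omega>
              - (\<integral>\<omega>'. CTs K m eps T (h T) (s (N T) i) \<omega>' \<partial>M)\<bar>\<^sup>2) ` {1..N T})) \<partial>M)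
         \<longlonglongrightarrow> 0"
proof -
  have ep: "epsm M eps"
    unfolding epsm_def epsm_axioms_def using M eps_meas eps_indep eps_id eps_4th eps_int eps_mean by auto
  obtain B where mB: "\<And>x. 0 \<le> x \<Longrightarrow> \<bar>m x\<bar> \<le> B"
    using m_bdd unfolding bounded_iff by auto
  have mo: "model M eps m K B"
    unfolding model_def model_axioms_def using ep mB K_nonneg by auto
  interpret model M eps m K B by (rule mo)
  obtain KM where KMb: "\<And>x. 0 \<le> x \<Longrightarrow> K x \<le> KM"
    using K_bdd unfolding bounded_iff by (metis abs_le_D1 atLeast_iff image_eqI real_norm_def)
  have KM0: "0 \<le> KM" using KMb[of 0] K_nonneg[of 0] by simp
  obtain LK where "LK-lipschitz_on {0..} K" using K_lip by auto
  then have Kc: "continuous_on {0..} K" by (rule lipschitz_on_continuous_on)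
  define F where "F T = (\<integral>\<omega>. Max (insert 0 ((\<lambda>i. \<bar>CTs K m eps T (h T) (s (N T) i) \<omega>
              - (\<integral>\<omega>'. CTs K m eps T (h T) (s (N T) i) \<omega>' \<partial>M)\<bar>\<^sup>2) ` {1..N T})) \<partial>M)" for T
  have F0: "0 \<le> F T" for T
    unfolding F_def by (rule Bochner_Integration.integral_nonneg) (rule Max_ge, auto)
  show ?thesis
    unfolding F_def[symmetric]
  proof (rule LIMSEQ_I)
    fix e :: real assume e: "0 < e"
    define \<delta> where "\<delta> = min (s0 / 2) (e / (8 * C0 + 8))"
    have C0p: "0 \<le> C0" by (rule C0_nonneg)
    have d0: "0 < \<delta>" unfolding \<delta>_def using s0 e C0p by simp
    have d1: "\<delta> \<le> s0 / 2" unfolding \<delta>_def by (rule min.cobounded1)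
    have d2: "\<delta> \<le> e / (8 * C0 + 8)" unfolding \<delta>_def by (rule min.cobounded2)
    have d3: "\<delta> < 1" using d1 s0 by simp
    obtain \<kappa> where k0: "0 < \<kappa>" and kap: "\<And>x. \<delta>/8 \<le> x \<Longrightarrow> x \<le> \<delta>/4 \<Longrightarrow> \<kappa> \<le> K x"
    proof -
      have "continuous_on {\<delta>/8..\<delta>/4} K" by (rule continuous_on_subset[OF Kc]) (use d0 in auto)
      moreover have "{\<delta>/8..\<delta>/4} \<noteq> {}" using d0 by simp
      ultimately obtain x0 where x0: "x0 \<in> {\<delta>/8..\<delta>/4}" "\<And>y. y \<in> {\<delta>/8..\<delta>/4} \<Longrightarrow> K x0 \<le> K y"
        using continuous_attains_inf[of "{\<delta>/8..\<delta>/4}" K] by auto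
      have "0 < K x0" using x0(1) d0 d3 by (intro K_pos) auto
      then show ?thesis using x0(2) that by auto
    qed
    define \<gamma> where "\<gamma> = 32 * \<xi> * KM / (\<kappa> * \<delta>)"
    have g0: "0 \<le> \<gamma>" unfolding \<gamma>_def using KM0 xi k0 d0 by simp
    have C1p: "0 \<le> C1 \<gamma>" unfolding C1_def using sig2_nonneg vv_nonneg by simp
    obtain c where c0: "0 < c" and ev1: "eventually (\<lambda>T. norm (real T / h T - \<xi>) \<le> c * norm (1 / real T)) sequentially"
      using h_rate by (elim landau_o.bigE) auto
    have ev2: "eventually (\<lambda>T. norm (real (N T) / real T) \<le> (e / (8 * C1 \<gamma> + 8)) * norm (1::real)) sequentially"
      using N_small by (intro landau_o.smallD) (use e C1p in auto)
    have ev3: "eventually (\<lambda>T. 1 + 2 * c + 32 * \<xi> / \<delta> \<le> real T) sequentially"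
      by (rule eventually_sequentiallyI[of "nat \<lceil>1 + 2 * c + 32 * \<xi> / \<delta>\<rceil>"]) linarith
    obtain T0 where T0: "\<And>T. T \<ge> T0 \<Longrightarrow> norm (real T / h T - \<xi>) \<le> c * norm (1 / real T)
        \<and> norm (real (N T) / real T) \<le> (e / (8 * C1 \<gamma> + 8)) * norm (1::real)
        \<and> 1 + 2 * c + 32 * \<xi> / \<delta> \<le> real T"
      using eventually_conj[OF ev1 eventually_conj[OF ev2 ev3]] unfolding eventually_sequentially by auto
    show "\<exists>no. \<forall>T\<ge>no. norm (F T - 0) < e"
    proof (intro exI allI impI)
      fix T assume "T0 \<le> T"
      note TT = T0[OF this]
      have Tb: "1 + 2 * c + 32 * \<xi> / \<delta> \<le> real T" using TT by blast
      have T1: "1 \<le> T" using Tb c0 xi d0 by (smt (verit) divide_nonneg_pos of_nat_1 of_nat_le_iff)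
      have Tp: "0 < real T" using T1 by simp
      define hh where "hh = h T"
      have hp: "0 < hh" unfolding hh_def using h_pos T1 by simp
      have r1: "\<bar>real T / hh - \<xi>\<bar> \<le> c / real T" using TT Tp unfolding hh_def by simp
      have "c / real T \<le> 1/2"
      proof -
        have "2 * c \<le> real T" using Tb xi d0 by (smt (verit) divide_nonneg_pos)
        then show ?thesis using Tp c0 by (simp add: divide_le_eq)
      qed
      then have r2: "\<bar>real T / hh - \<xi>\<bar> \<le> 1/2" using r1 by linarith
      have Th1: "real T / hh \<le> 2 * \<xi>" using r2 xi by linarith
      have Th2: "1/2 \<le> real T / hh" using r2 xi by linarith
      have hT1: "real T \<le> 2 * \<xi> * hh" using Th1 hp by (simp add: divide_le_eq mult.commute)
      have hT2: "hh \<le> 2 * real T" using Th2 hp by (simp add: le_divide_eq)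
      have dT32: "32 * \<xi> \<le> \<delta> * real T"
      proof -
        have "32 * \<xi> / \<delta> \<le> real T" using Tb c0 by linarith
        then show ?thesis using d0 by (simp add: divide_le_eq mult.commute)
      qed
      have dh: "16 \<le> \<delta> * hh"
      proof -
        have "\<delta> * real T \<le> \<delta> * (2 * \<xi> * hh)" using hT1 d0 by (intro mult_left_mono) auto
        then have "32 * \<xi> \<le> 2 * \<xi> * (\<delta> * hh)" using dT32 by (simp add: mult_ac)
        then show ?thesis using xi by (simp add: mult_le_cancel_left_pos)
      qed
      define I0 where "I0 = nat \<lfloor>\<delta> * real T\<rfloor>"
      have dTp: "0 \<le> \<delta> * real T" using d0 Tp by simp
      have fl: "real I0 = real_of_int \<lfloor>\<delta> * real T\<rfloor>" unfolding I0_def using dTp by simp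
      have I0r: "real I0 \<le> \<delta> * real T" unfolding fl by (rule of_int_floor_le)
      have I0r2: "\<delta> * real T - 1 \<le> real I0" unfolding fl using floor_correct[of "\<delta> * real T"] by linarith
      have I01: "1 \<le> I0" using I0r2 dT32 xi by linarith
      have I0T: "I0 \<le> T"
      proof -
        have "\<delta> * real T \<le> real T" using d3 Tp by simp
        then show ?thesis using I0r by linarith
      qed
      have wb: "wt K hh i j \<le> \<gamma> / real T" if i: "I0 < i" for i j
      proof -
        have cnt: "2 \<le> (\<delta>/4 - \<delta>/8) * hh" using dh by simp
        have ib: "\<delta>/4 * hh \<le> real (i - 1)"
        proof -
          have "real I0 \<le> real (i - 1)" using i by simp
          moreover have "\<delta>/4 * hh \<le> \<delta> * real T - 1"
          proof -
            have "\<delta> * hh \<le> \<delta> * (2 * real T)" using hT2 d0 by (intro mult_left_mono) auto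
            then show ?thesis using dh by linarith
          qed
          ultimately show ?thesis using I0r2 by linarith
        qed
        have "wt K hh i j \<le> 2 * KM / (\<kappa> * (\<delta>/4 - \<delta>/8) * hh)"
          by (rule wt_bound[OF hp K_nonneg KMb kap k0 _ cnt ib]) (use d0 in auto)
        also have "\<dots> = 16 * KM / (\<kappa> * \<delta> * hh)" by (simp add: field_simps)
        also have "\<dots> \<le> \<gamma> / real T"
        proof -
          have "16 * KM / (\<kappa> * \<delta> * hh) = (16 * KM / (\<kappa> * \<delta>)) / hh" by (simp add: field_simps)
          also have "\<dots> \<le> (16 * KM / (\<kappa> * \<delta>)) * (2 * \<xi> / real T)"
          proof -
            have "1 / hh \<le> 2 * \<xi> / real T" using hT1 hp Tp by (simp add: field_simps mult.commute)
            moreover have "0 \<le> 16 * KM / (\<kappa> * \<delta>)" using KM0 k0 d0 by simp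
            ultimately show ?thesis by (metis divide_inverse inverse_eq_divide mult_left_mono)
          qed
          also have "\<dots> = \<gamma> / real T" unfolding \<gamma>_def by (simp add: field_simps)
          finally show ?thesis .
        qed
        finally show ?thesis .
      qed
      define n where "n k = nat \<lfloor>real T * s (N T) k\<rfloor>" for k
      have nI: "I0 \<le> n k \<and> n k \<le> T" if k: "k \<in> {1..N T}" for k
      proof -
        have sb: "s0 < s (N T) k" "s (N T) k \<le> 1"
          using s_bounds[OF s_first s_incr s_last, of k "N T"] k by auto
        have "\<delta> * real T \<le> real T * s (N T) k" using sb d1 s0 Tp by (simp add: mult.commute mult_right_mono)
        then have "I0 \<le> n k" unfolding I0_def n_def by (intro nat_mono floor_mono)
        moreover have le: "real T * s (N T) k \<le> real T" using sb Tp by simp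
        have "nat \<lfloor>real T * s (N T) k\<rfloor> \<le> nat \<lfloor>real T\<rfloor>" by (intro nat_mono floor_mono le)
        then have "n k \<le> T" unfolding n_def by simp
        ultimately show ?thesis by simp
      qed
      have mb: "(\<integral>\<omega>. Max (insert 0 ((\<lambda>k. \<bar>Gs T hh {2..n k} \<omega> - (\<integral>\<omega>'. Gs T hh {2..n k} \<omega>' \<partial>M)\<bar>^2) ` {1..N T})) \<partial>M)
          \<le> 2 * \<delta>^2 * C0 + 2 * real (card {1..N T}) * (C1 \<gamma> / real T)"
        by (rule main_bound[OF T1 hp I01 I0T nI _ g0 wb I0r]) auto
      have FT: "F T = (\<integral>\<omega>. Max (insert 0 ((\<lambda>k. \<bar>Gs T hh {2..n k} \<omega> - (\<integral>\<omega>'. Gs T hh {2..n k} \<omega>' \<partial>M)\<bar>^2) ` {1..N T})) \<partial>M)"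
        unfolding F_def CTs_Gs n_def hh_def ..
      have p1: "2 * \<delta>^2 * C0 \<le> e / 4"
      proof -
        have "\<delta>^2 \<le> \<delta>" using d0 d3 by (simp add: power2_eq_square mult_le_cancel_right1 less_imp_le)
        then have "2 * \<delta>^2 * C0 \<le> 2 * \<delta> * C0" using C0p by (intro mult_right_mono) auto
        also have "\<dots> \<le> 2 * (e / (8 * C0 + 8)) * C0" using d2 C0p by (intro mult_right_mono) auto
        also have "\<dots> \<le> e / 4"
        proof -
          have "2 * (e / (8 * C0 + 8)) * C0 = e * (2 * C0 / (8 * C0 + 8))" by simp
          also have "\<dots> \<le> e * (1/4)" using e C0p by (intro mult_left_mono) (auto simp: field_simps)
          finally show ?thesis by simp
        qed
        finally show ?thesis .
      qed
      have p2: "2 * real (card {1..N T}) * (C1 \<gamma> / real T) \<le> e / 4"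
      proof -
        have nt: "real (N T) / real T \<le> e / (8 * C1 \<gamma> + 8)" using TT by simp
        have "2 * real (card {1..N T}) * (C1 \<gamma> / real T) = 2 * C1 \<gamma> * (real (N T) / real T)" by simp
        also have "\<dots> \<le> 2 * C1 \<gamma> * (e / (8 * C1 \<gamma> + 8))" using nt C1p by (intro mult_left_mono) auto
        also have "\<dots> = e * (2 * C1 \<gamma> / (8 * C1 \<gamma> + 8))" by simp
        also have "\<dots> \<le> e * (1/4)" using e C1p by (intro mult_left_mono) (auto simp: field_simps)
        finally show ?thesis by simp
      qed
      have "F T \<le> e / 2" using mb p1 p2 FT by linarith
      then show "norm (F T - 0) < e" using F0[of T] e by simp
    qed
  qed
qed

end
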